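(* Let $(X,d)$, $(\Lambda,d_\Lambda)$ be compact metric spaces, $\tau:\Lambda\times X\to X$ continuous and $q:X\to\mathcal P(\Lambda)$ continuous. Assume: (W1) each $\tau_\lambda$ is $1$-Lipschitz on $X$; (MP1) there are $s>0$ and an integer $M\ge1$ such that $\int_{\Lambda^M}|f(\tau_{\lambda^M}(x))-f(\tau_{\lambda^M}(y))|\,dP^q_{M,x}(\lambda^M)\le s\,d(x,y)$ for all $x,y\in X$ and all $f\in\mathrm{Lip}_1(X)$; (H2) there is $r\ge0$ with $d(\tau(\lambda_1,x),\tau(\lambda_2,x))\le r\,d_\Lambda(\lambda_1,\lambda_2)$ for all $\lambda_1,\lambda_2$, $x$; (H3) there is $t\ge0$ with $d_{MK}(q_x,q_y)\le t\,d(x,y)$ for all $x,y\in X$; and suppose $s+r\,M\,t<1$. Then there is a unique $\mu_{\mathcal R}\in\mathcal P(X)$ with $T_q(\mu_{\mathcal R})=\mu_{\mathcal R}$, and for every $\mu_0\in\mathcal P(X)$, $T_q^k(\mu_0)\to\mu_{\mathcal R}$ exponentially fast in the Monge–Kantorovich distance.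
   Context: $\mathcal{P}(Y)$ is the set of Borel probability measures on a compact metric space $Y$, with $d_{MK}(\mu,\nu)=\sup_{f\in \mathrm{Lip}_1(Y)}\{\int f\,d\mu-\int f\,d\nu\}$, $\mathrm{Lip}_1(Y)$ the real $1$-Lipschitz functions on $Y$. $\tau_\lambda(x)=\tau(\lambda,x)$; for $\lambda^j=(\lambda_0,\dots,\lambda_{j-1})$, $\tau_{\lambda^j}=\tau_{\lambda_{j-1}}\circ\cdots\circ\tau_{\lambda_0}$. $P^q_{M,x}\in\mathcal P(\Lambda^M)$ is given by $dP^q_{M,x}(\lambda_0,\dots,\lambda_{M-1})=dq_{\tau_{\lambda^{M-1}}(x)}(\lambda_{M-1})\cdots dq_{\tau_{\lambda^1}(x)}(\lambda_1)\,dq_x(\lambda_0)$. The Markov operator $T_q$ on $\mathcal P(X)$ is defined by $\int_X f\,dT_q(\mu)=\int_X\int_\Lambda f(\tau(\lambda,x))\,dq_x(\lambda)\,d\mu(x)$ for $f\in C(X)$. *)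

theory Defs
  imports "HOL-Probability.Probability"
begin

definition prob_measures :: "'b::topological_space measure set" where
  "prob_measures = {\<mu>. prob_space \<mu> \<and> sets \<mu> = sets borel}"

definition Lip1 :: "('b::metric_space \<Rightarrow> real) set" where
  "Lip1 = {f. \<forall>x y. \<bar>f x - f y\<bar> \<le> dist x y}"

definition dMK :: "'b::metric_space measure \<Rightarrow> 'b measure \<Rightarrow> real" where
  "dMK \<mu> \<nu> = (SUP f\<in>Lip1. (\<integral>y. f y \<partial>\<mu>) - (\<integral>y. f y \<partial>\<nu>))"

text \<open>tau_{lambda^j} for a list [lambda_0, ..., lambda_{j-1}]:
  tau_{lambda_{j-1}} o ... o tau_{lambda_0}.\<close>
definition tau_seq :: "('l \<Rightarrow> 'a \<Rightarrow> 'a) \<Rightarrow> 'l list \<Rightarrow> 'a \<Rightarrow> 'a" where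
  "tau_seq \<tau> ls x = foldl (\<lambda>y l. \<tau> l y) x ls"

text \<open>Integral of a nonnegative function g on Lambda^M (words [lambda_0,...,lambda_{M-1}])
  with respect to P^q_{M,x}, given by its defining iterated integral
  dq_{tau_{lambda^{M-1}}(x)}(lambda_{M-1}) ... dq_{tau_{lambda^1}(x)}(lambda_1) dq_x(lambda_0).\<close>
fun P_int :: "('l \<Rightarrow> 'a \<Rightarrow> 'a) \<Rightarrow> ('a \<Rightarrow> 'l measure) \<Rightarrow> nat \<Rightarrow> 'a
               \<Rightarrow> ('l list \<Rightarrow> ennreal) \<Rightarrow> ennreal" where
  "P_int \<tau> q 0 x g = g []"
| "P_int \<tau> q (Suc n) x g = (\<integral>\<^sup>+ l. P_int \<tau> q n (\<tau> l x) (\<lambda>ls. g (l # ls)) \<partial>(q x))"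

definition Tq :: "('l::topological_space \<Rightarrow> 'a::topological_space \<Rightarrow> 'a) \<Rightarrow> ('a \<Rightarrow> 'l measure)
                   \<Rightarrow> 'a measure \<Rightarrow> 'a measure" where
  "Tq \<tau> q \<mu> = \<mu> \<bind> (\<lambda>x. distr (q x) borel (\<lambda>l. \<tau> l x))"

end

theory Submission
  imports Defs
begin


definition lip :: "real \<Rightarrow> ('b::metric_space \<Rightarrow> real) \<Rightarrow> bool" where
  "lip L f \<longleftrightarrow> (\<forall>x y. \<bar>f x - f y\<bar> \<le> L * dist x y)"

lemma lipD: "lip L f \<Longrightarrow> \<bar>f x - f y\<bar> \<le> L * dist x y"
  by (simp add: lip_def)

lemma lipI: "(\<And>x y. \<bar>f x - f y\<bar> \<le> L * dist x y) \<Longrightarrow> lip L f"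
  by (simp add: lip_def)

lemma lip_mono: "lip L f \<Longrightarrow> L \<le> L' \<Longrightarrow> lip L' f"
  unfolding lip_def by (meson dual_order.trans mult_right_mono zero_le_dist)

lemma lip_cont: "lip L f \<Longrightarrow> continuous_on UNIV f"
proof -
  assume l: "lip L f"
  then have l': "lip (max L 1) f" by (rule lip_mono) simp
  show ?thesis unfolding continuous_on_iff
  proof (intro ballI allI impI)
    fix x and e :: real assume "0 < e"
    show "\<exists>d>0. \<forall>x'\<in>UNIV. dist x' x < d \<longrightarrow> dist (f x') (f x) < e"
    proof (intro exI[of _ "e / max L 1"] conjI ballI impI)
      show "0 < e / max L 1" using \<open>0 < e\<close> by simp
      fix x' assume "dist x' x < e / max L 1"
      then have "max L 1 * dist x' x < e"
        by (simp add: field_simps)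
      moreover have "\<bar>f x' - f x\<bar> \<le> max L 1 * dist x' x" using lipD[OF l'] .
      ultimately show "dist (f x') (f x) < e" by (simp add: dist_real_def)
    qed
  qed
qed

lemma lip_meas: "lip L f \<Longrightarrow> f \<in> borel_measurable borel"
  by (rule borel_measurable_continuous_onI[OF lip_cont])

lemma compact_diam:
  assumes "compact (UNIV :: 'b::metric_space set)"
  obtains D where "D \<ge> 0" "\<And>x y::'b. dist x y \<le> D"
proof -
  have "bounded (UNIV :: 'b set)" using assms compact_imp_bounded by blast
  then obtain e where e: "\<forall>y::'b. dist undefined y \<le> e"
    unfolding bounded_any_center[of _ undefined] by auto
  have "dist x y \<le> 2 * e" for x y :: 'b
    using dist_triangle[of x y undefined] e[rule_format, of x] e[rule_format, of y]
    by (simp add: dist_commute)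
  moreover have "0 \<le> 2 * e" using e[rule_format, of undefined] by simp
  ultimately show ?thesis using that by blast
qed

lemma lip_bounded:
  assumes "compact (UNIV :: 'b::metric_space set)" "lip L (f :: 'b \<Rightarrow> real)"
  obtains B where "\<And>x. \<bar>f x\<bar> \<le> B"
proof -
  obtain D where D: "D \<ge> 0" "\<And>x y::'b. dist x y \<le> D" using compact_diam[OF assms(1)] by blast
  have "\<bar>f x\<bar> \<le> \<bar>f undefined\<bar> + \<bar>L\<bar> * D" for x
  proof -
    have "\<bar>f x - f undefined\<bar> \<le> L * dist x undefined" by (rule lipD[OF assms(2)])
    also have "\<dots> \<le> \<bar>L\<bar> * dist x undefined" by (simp add: mult_right_mono)
    also have "\<dots> \<le> \<bar>L\<bar> * D" by (simp add: D(2) mult_left_mono)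
    finally show ?thesis by linarith
  qed
  then show ?thesis using that by blast
qed

lemma prob_measuresD:
  assumes "\<mu> \<in> prob_measures"
  shows "prob_space \<mu>" "sets \<mu> = sets borel" "space \<mu> = UNIV"
  using assms unfolding prob_measures_def by (auto dest: sets_eq_imp_space_eq)

lemma lip_meas_mu: "\<mu> \<in> prob_measures \<Longrightarrow> lip L f \<Longrightarrow> f \<in> borel_measurable \<mu>"
  using measurable_cong_sets[OF prob_measuresD(2) refl] lip_meas by blast

lemma lip_integrable:
  assumes "compact (UNIV :: 'b::metric_space set)" "\<mu> \<in> prob_measures" "lip L (f :: 'b \<Rightarrow> real)"
  shows "integrable \<mu> f"
proof -
  interpret prob_space \<mu> using prob_measuresD(1)[OF assms(2)] .
  obtain B where "\<And>x. \<bar>f x\<bar> \<le> B" using lip_bounded[OF assms(1,3)] by blast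
  then show ?thesis
    by (intro integrable_const_bound[where B=B]) (auto intro: lip_meas_mu[OF assms(2,3)])
qed

lemma integral_bounds_pm:
  assumes "compact (UNIV :: 'b::metric_space set)" "\<mu> \<in> prob_measures" "lip L (f :: 'b \<Rightarrow> real)"
    and "\<And>x. a \<le> f x" "\<And>x. f x \<le> b"
  shows "a \<le> integral\<^sup>L \<mu> f" "integral\<^sup>L \<mu> f \<le> b"
proof -
  interpret prob_space \<mu> using prob_measuresD(1)[OF assms(2)] .
  have i: "integrable \<mu> f" by (rule lip_integrable[OF assms(1-3)])
  show "a \<le> integral\<^sup>L \<mu> f" using integral_ge_const[OF i] assms(4) by auto
  show "integral\<^sup>L \<mu> f \<le> b" using integral_le_const[OF i] assms(5) by auto
qed



lemma dMK_bdd: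
  assumes "compact (UNIV :: 'b::metric_space set)" "\<mu> \<in> prob_measures" "\<nu> \<in> prob_measures"
  shows "bdd_above ((\<lambda>f. (\<integral>y. f y \<partial>\<mu>) - (\<integral>y. f y \<partial>(\<nu>::'b measure))) ` Lip1)"
proof -
  obtain D where D: "D \<ge> 0" "\<And>x y::'b. dist x y \<le> D" using compact_diam[OF assms(1)] by blast
  show ?thesis unfolding bdd_above_def
  proof (intro exI[of _ "2*D"] ballI, clarify)
    fix f :: "'b \<Rightarrow> real" assume "f \<in> Lip1"
    then have l: "lip 1 f" by (simp add: Lip1_def lip_def)
    have b: "\<bar>f x - f undefined\<bar> \<le> D" for x
      using lipD[OF l, of x undefined] D(2)[of x undefined] by simp
    have "\<And>x. f x \<le> f undefined + D" "\<And>x. f undefined - D \<le> f x"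
      using b by (smt (verit))+
    then have "integral\<^sup>L \<mu> f \<le> f undefined + D" "f undefined - D \<le> integral\<^sup>L \<nu> f"
      using integral_bounds_pm[OF assms(1) assms(2) l] integral_bounds_pm[OF assms(1) assms(3) l]
      by blast+
    then show "integral\<^sup>L \<mu> f - integral\<^sup>L \<nu> f \<le> 2 * D" by simp
  qed
qed

lemma dMK_ge:
  assumes "compact (UNIV :: 'b::metric_space set)" "\<mu> \<in> prob_measures" "\<nu> \<in> prob_measures"
    and "lip 1 f"
  shows "(\<integral>y. f y \<partial>\<mu>) - (\<integral>y. f y \<partial>(\<nu>::'b measure)) \<le> dMK \<mu> \<nu>"
  unfolding dMK_def
  by (rule cSUP_upper[OF _ dMK_bdd[OF assms(1-3)]]) (use assms(4) in \<open>simp add: Lip1_def lip_def\<close>)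

lemma dMK_le:
  assumes "\<And>f. lip 1 f \<Longrightarrow> (\<integral>y. f y \<partial>\<mu>) - (\<integral>y. f y \<partial>(\<nu>::'b::metric_space measure)) \<le> C"
  shows "dMK \<mu> \<nu> \<le> C"
  unfolding dMK_def
proof (rule cSUP_least)
  show "Lip1 \<noteq> {}" by (auto simp: Lip1_def intro: exI[of _ "\<lambda>_. 0"])
  fix f :: "'b \<Rightarrow> real" assume "f \<in> Lip1" then show "integral\<^sup>L \<mu> f - integral\<^sup>L \<nu> f \<le> C"
    using assms by (simp add: Lip1_def lip_def)
qed

lemma lip_scale_dMK:
  assumes "compact (UNIV :: 'b::metric_space set)" "\<mu> \<in> prob_measures" "\<nu> \<in> prob_measures"
    and "lip K f" "K \<ge> 0"
  shows "(\<integral>y. f y \<partial>\<mu>) - (\<integral>y. f y \<partial>(\<nu>::'b measure)) \<le> K * dMK \<mu> \<nu>"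
proof (cases "K = 0")
  case True
  then have "f x = f undefined" for x using lipD[OF assms(4), of x undefined] by simp
  then have "f = (\<lambda>_. f undefined)" by auto
  moreover have "prob_space \<mu>" "prob_space \<nu>" using assms(2,3) prob_measuresD by auto
  ultimately have "integral\<^sup>L \<mu> f = f undefined" "integral\<^sup>L \<nu> f = f undefined"
    by (metis lebesgue_integral_const prob_space.prob_space scaleR_one)+
  then show ?thesis using True by simp
next
  case False
  then have K: "K > 0" using assms(5) by simp
  have l: "lip 1 (\<lambda>x. f x / K)" unfolding lip_def
  proof (intro allI)
    fix x y
    have "\<bar>f x / K - f y / K\<bar> = \<bar>f x - f y\<bar> / K" using K by (simp add: diff_divide_distrib[symmetric])
    also have "\<dots> \<le> K * dist x y / K" using lipD[OF assms(4), of x y] K by (intro divide_right_mono) auto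
    finally show "\<bar>f x / K - f y / K\<bar> \<le> 1 * dist x y" using K by simp
  qed
  have "(\<integral>y. f y / K \<partial>\<mu>) - (\<integral>y. f y / K \<partial>\<nu>) \<le> dMK \<mu> \<nu>"
    by (rule dMK_ge[OF assms(1-3) l])
  then have "((\<integral>y. f y \<partial>\<mu>) - (\<integral>y. f y \<partial>\<nu>)) / K \<le> dMK \<mu> \<nu>"
    by (simp add: diff_divide_distrib)
  then show ?thesis using K by (simp add: divide_le_eq mult.commute)
qed

locale setting =
  fixes \<tau> :: "'l::metric_space \<Rightarrow> 'a::metric_space \<Rightarrow> 'a"
    and q :: "'a \<Rightarrow> 'l measure"
    and s r t :: real and M :: nat
  assumes X_compact: "compact (UNIV :: 'a set)"
    and L_compact: "compact (UNIV :: 'l set)"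
    and q_prob: "\<And>x. q x \<in> prob_measures"
    and W1: "\<And>l x y. dist (\<tau> l x) (\<tau> l y) \<le> dist x y"
    and MP1_s: "s > 0" and MP1_M: "M \<ge> 1"
    and MP1: "\<And>x y f. f \<in> Lip1 \<Longrightarrow>
               P_int \<tau> q M x (\<lambda>ls. ennreal \<bar>f (tau_seq \<tau> ls x) - f (tau_seq \<tau> ls y)\<bar>)
                 \<le> ennreal (s * dist x y)"
    and H2_r: "r \<ge> 0"
    and H2: "\<And>l1 l2 x. dist (\<tau> l1 x) (\<tau> l2 x) \<le> r * dist l1 l2"
    and H3_t: "t \<ge> 0"
    and H3: "\<And>x y. dMK (q x) (q y) \<le> t * dist x y"
    and contr: "s + r * real M * t < 1"
begin

lemma q_ps: "prob_space (q x)" using q_prob prob_measuresD by blast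

lemma q_int: "lip K G \<Longrightarrow> integrable (q x) G"
  by (rule lip_integrable[OF L_compact q_prob])

lemma q_diff: 
  assumes "lip K G" "K \<ge> 0"
  shows "\<bar>(\<integral>l. G l \<partial>q x) - (\<integral>l. G l \<partial>q y)\<bar> \<le> K * t * dist x y"
proof -
  have a: "(\<integral>l. G l \<partial>q x) - (\<integral>l. G l \<partial>q y) \<le> K * t * dist x y" for x y
  proof -
    have "(\<integral>l. G l \<partial>q x) - (\<integral>l. G l \<partial>q y) \<le> K * dMK (q x) (q y)"
      by (rule lip_scale_dMK[OF L_compact q_prob q_prob assms])
    also have "\<dots> \<le> K * (t * dist x y)" using H3 assms(2) by (simp add: mult_left_mono)
    finally show ?thesis by simp
  qed
  show ?thesis using a[of x y] a[of y x] by (simp add: dist_commute abs_le_iff)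
qed

end


definition plip :: "real \<Rightarrow> ('b::metric_space \<Rightarrow> 'b \<Rightarrow> real) \<Rightarrow> bool" where
  "plip L G \<longleftrightarrow> (\<forall>z w z' w'. \<bar>G z w - G z' w'\<bar> \<le> L * (dist z z' + dist w w'))"

lemma plipD: "plip L G \<Longrightarrow> \<bar>G z w - G z' w'\<bar> \<le> L * (dist z z' + dist w w')"
  by (simp add: plip_def)

lemma lip_add: "lip L f \<Longrightarrow> lip K g \<Longrightarrow> lip (L + K) (\<lambda>x. f x + g x)"
  unfolding lip_def
proof (intro allI)
  fix x y assume a: "\<forall>x y. \<bar>f x - f y\<bar> \<le> L * dist x y" "\<forall>x y. \<bar>g x - g y\<bar> \<le> K * dist x y"
  have "\<bar>f x + g x - (f y + g y)\<bar> \<le> \<bar>f x - f y\<bar> + \<bar>g x - g y\<bar>" by simp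
  also have "\<dots> \<le> L * dist x y + K * dist x y" using a by (intro add_mono) auto
  finally show "\<bar>f x + g x - (f y + g y)\<bar> \<le> (L + K) * dist x y" by (simp add: distrib_right)
qed

lemma lip_scale: "lip L f \<Longrightarrow> lip (\<bar>a\<bar> * L) (\<lambda>x. a * f x)"
  unfolding lip_def
proof (intro allI)
  fix x y assume a: "\<forall>x y. \<bar>f x - f y\<bar> \<le> L * dist x y"
  have "\<bar>a * f x - a * f y\<bar> = \<bar>a\<bar> * \<bar>f x - f y\<bar>" by (simp add: abs_mult[symmetric] right_diff_distrib)
  also have "\<dots> \<le> \<bar>a\<bar> * (L * dist x y)" using a by (intro mult_left_mono) auto
  finally show "\<bar>a * f x - a * f y\<bar> \<le> \<bar>a\<bar> * L * dist x y" by (simp add: mult.assoc)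
qed

lemma lip_const: "lip 0 (\<lambda>x. c)" by (simp add: lip_def)

lemma lip_nonneg_ex: "lip L f \<Longrightarrow> \<exists>L'. L' > 0 \<and> lip L' f"
  by (rule exI[of _ "max L 1"]) (auto intro: lip_mono)

context setting begin

definition U :: "('a \<Rightarrow> real) \<Rightarrow> 'a \<Rightarrow> real" where
  "U f x = (\<integral>l. f (\<tau> l x) \<partial>q x)"

definition V :: "('a \<Rightarrow> 'a \<Rightarrow> real) \<Rightarrow> 'a \<Rightarrow> 'a \<Rightarrow> real" where
  "V G z w = (\<integral>l. G (\<tau> l z) (\<tau> l w) \<partial>q z)"

lemma lip_tau_l: "lip L f \<Longrightarrow> L \<ge> 0 \<Longrightarrow> lip (L * r) (\<lambda>l. f (\<tau> l x))"
  unfolding lip_def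
proof (intro allI)
  fix l1 l2 assume "\<forall>x y. \<bar>f x - f y\<bar> \<le> L * dist x y" "L \<ge> 0"
  then have "\<bar>f (\<tau> l1 x) - f (\<tau> l2 x)\<bar> \<le> L * dist (\<tau> l1 x) (\<tau> l2 x)" by blast
  also have "\<dots> \<le> L * (r * dist l1 l2)" using H2 \<open>L \<ge> 0\<close> by (simp add: mult_left_mono)
  finally show "\<bar>f (\<tau> l1 x) - f (\<tau> l2 x)\<bar> \<le> L * r * dist l1 l2" by (simp add: mult.assoc)
qed

lemma plip_tau_l: "plip L G \<Longrightarrow> L \<ge> 0 \<Longrightarrow> lip (2 * r * L) (\<lambda>l. G (\<tau> l z) (\<tau> l w))"
  unfolding lip_def
proof (intro allI)
  fix l1 l2 assume pl: "plip L G" "L \<ge> 0"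
  have "\<bar>G (\<tau> l1 z) (\<tau> l1 w) - G (\<tau> l2 z) (\<tau> l2 w)\<bar> \<le> L * (dist (\<tau> l1 z) (\<tau> l2 z) + dist (\<tau> l1 w) (\<tau> l2 w))"
    by (rule plipD[OF pl(1)])
  also have "\<dots> \<le> L * (r * dist l1 l2 + r * dist l1 l2)" using H2 \<open>L \<ge> 0\<close> by (intro mult_left_mono add_mono) auto
  finally show "\<bar>G (\<tau> l1 z) (\<tau> l1 w) - G (\<tau> l2 z) (\<tau> l2 w)\<bar> \<le> 2 * r * L * dist l1 l2" by (simp add: algebra_simps)
qed

lemma q_abs_bound:
  assumes "lip K g" "\<And>l. \<bar>g l\<bar> \<le> B"
  shows "\<bar>\<integral>l. g l \<partial>q x\<bar> \<le> B"
proof -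
  have b1: "-B \<le> g l" "g l \<le> B" for l using assms(2)[of l] by linarith+
  have "-B \<le> (\<integral>l. g l \<partial>q x)" "(\<integral>l. g l \<partial>q x) \<le> B"
    using integral_bounds_pm[OF L_compact q_prob assms(1) b1] by auto
  then show ?thesis by simp
qed

lemma q_bounds:
  assumes "lip K g" "\<And>l. a \<le> g l" "\<And>l. g l \<le> b"
  shows "a \<le> (\<integral>l. g l \<partial>q x)" "(\<integral>l. g l \<partial>q x) \<le> b"
  using integral_bounds_pm[OF L_compact q_prob assms(1) assms(2,3)] by auto

lemma U_lip:
  assumes "lip L f" "L \<ge> 0"
  shows "lip (L * (1 + r * t)) (U f)"
proof (rule lipI)
  fix x y
  have l1: "lip (L * r) (\<lambda>l. f (\<tau> l x))" "lip (L * r) (\<lambda>l. f (\<tau> l y))" using lip_tau_l assms by auto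
  have i1: "integrable (q x) (\<lambda>l. f (\<tau> l x))" "integrable (q x) (\<lambda>l. f (\<tau> l y))" using q_int l1 by auto
  have ld: "lip (L * r + \<bar>-1\<bar> * (L * r)) (\<lambda>l. f (\<tau> l x) + (-1) * f (\<tau> l y))"
    by (intro lip_add lip_scale l1)
  have "U f x - U f y = (\<integral>l. f (\<tau> l x) - f (\<tau> l y) \<partial>q x) + ((\<integral>l. f (\<tau> l y) \<partial>q x) - (\<integral>l. f (\<tau> l y) \<partial>q y))"
    unfolding U_def using i1 by simp
  also have "\<bar>\<dots>\<bar> \<le> L * dist x y + L * r * t * dist x y"
  proof (rule order_trans[OF abs_triangle_ineq add_mono])
    show "\<bar>\<integral>l. f (\<tau> l x) - f (\<tau> l y) \<partial>q x\<bar> \<le> L * dist x y"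
      apply (rule q_abs_bound[where K="L * r + \<bar>-1\<bar> * (L * r)"])
      using ld apply simp
      using lipD[OF assms(1)] W1 assms(2) by (meson mult_left_mono order_trans)
    show "\<bar>(\<integral>l. f (\<tau> l y) \<partial>q x) - (\<integral>l. f (\<tau> l y) \<partial>q y)\<bar> \<le> L * r * t * dist x y"
      by (rule q_diff[OF l1(2)]) (use assms(2) H2_r in simp)
  qed
  finally show "\<bar>U f x - U f y\<bar> \<le> L * (1 + r * t) * dist x y" by (simp add: algebra_simps)
qed

lemma V_plip:
  assumes "plip L G" "L \<ge> 0"
  shows "plip (L * (1 + 2 * r * t)) (V G)"
  unfolding plip_def
proof (intro allI)
  fix z w z' w'
  have l1: "lip (2 * r * L) (\<lambda>l. G (\<tau> l z) (\<tau> l w))" "lip (2 * r * L) (\<lambda>l. G (\<tau> l z') (\<tau> l w'))"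
    using plip_tau_l assms by auto
  have i1: "integrable (q z) (\<lambda>l. G (\<tau> l z) (\<tau> l w))" "integrable (q z) (\<lambda>l. G (\<tau> l z') (\<tau> l w'))"
    using q_int l1 by auto
  have ld: "lip (2 * r * L + \<bar>-1\<bar> * (2 * r * L)) (\<lambda>l. G (\<tau> l z) (\<tau> l w) + (-1) * G (\<tau> l z') (\<tau> l w'))"
    by (intro lip_add lip_scale l1)
  have "V G z w - V G z' w' = (\<integral>l. G (\<tau> l z) (\<tau> l w) - G (\<tau> l z') (\<tau> l w') \<partial>q z)
       + ((\<integral>l. G (\<tau> l z') (\<tau> l w') \<partial>q z) - (\<integral>l. G (\<tau> l z') (\<tau> l w') \<partial>q z'))"
    unfolding V_def using i1 by simp
  also have "\<bar>\<dots>\<bar> \<le> L * (dist z z' + dist w w') + 2 * r * L * t * dist z z'"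
  proof (rule order_trans[OF abs_triangle_ineq add_mono])
    show "\<bar>\<integral>l. G (\<tau> l z) (\<tau> l w) - G (\<tau> l z') (\<tau> l w') \<partial>q z\<bar> \<le> L * (dist z z' + dist w w')"
      apply (rule q_abs_bound[where K="2 * r * L + \<bar>-1\<bar> * (2 * r * L)"])
      using ld apply simp
      using plipD[OF assms(1)] W1 assms(2) by (meson add_mono mult_left_mono order_trans)
    show "\<bar>(\<integral>l. G (\<tau> l z') (\<tau> l w') \<partial>q z) - (\<integral>l. G (\<tau> l z') (\<tau> l w') \<partial>q z')\<bar> \<le> 2 * r * L * t * dist z z'"
      by (rule q_diff[OF l1(2)]) (use assms(2) H2_r in simp)
  qed
  also have "\<dots> \<le> L * (1 + 2 * r * t) * (dist z z' + dist w w')"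
    using assms(2) H2_r H3_t by (simp add: algebra_simps mult_nonneg_nonneg)
  finally show "\<bar>V G z w - V G z' w'\<bar> \<le> L * (1 + 2 * r * t) * (dist z z' + dist w w')" .
qed

lemma U_bounds:
  assumes "lip L f" "L \<ge> 0" "\<And>y. a \<le> f y" "\<And>y. f y \<le> b"
  shows "a \<le> U f x" "U f x \<le> b"
  unfolding U_def using q_bounds[OF lip_tau_l[OF assms(1,2)], where a=a and b=b] assms(3,4) by auto

lemma U_add:
  assumes "lip L f" "lip K g" "L \<ge> 0" "K \<ge> 0"
  shows "U (\<lambda>x. f x + g x) x = U f x + U g x"
  unfolding U_def using q_int[OF lip_tau_l[OF assms(1,3)]] q_int[OF lip_tau_l[OF assms(2,4)]] by simp

lemma U_scale: "U (\<lambda>x. a * f x) x = a * U f x"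
  unfolding U_def by simp

lemma U_mono:
  assumes "lip L f" "lip K g" "L \<ge> 0" "K \<ge> 0" "\<And>x. f x \<le> g x"
  shows "U f x \<le> U g x"
  unfolding U_def
  by (rule integral_mono[OF q_int[OF lip_tau_l[OF assms(1,3)]] q_int[OF lip_tau_l[OF assms(2,4)]]])
     (use assms(5) in auto)

lemma U_const: "U (\<lambda>_. c) x = c"
  unfolding U_def using q_ps by (simp add: prob_space.prob_space)

lemma Un_lip:
  assumes "lip L f" "L \<ge> 0"
  shows "lip (L * (1 + r * t) ^ n) ((U ^^ n) f)"
proof (induction n)
  case 0 then show ?case using assms by simp
next
  case (Suc n)
  have "lip (L * (1 + r * t) ^ n * (1 + r * t)) (U ((U ^^ n) f))"
    by (rule U_lip[OF Suc]) (use assms(2) H2_r H3_t in simp)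
  then show ?case by (simp add: algebra_simps)
qed

lemma Un_lip_ex: "lip L f \<Longrightarrow> L \<ge> 0 \<Longrightarrow> \<exists>K\<ge>0. lip K ((U ^^ n) f)"
  using Un_lip H2_r H3_t by (intro exI[of _ "L * (1 + r * t) ^ n"]) auto

lemma Vn_plip:
  assumes "plip L G" "L \<ge> 0"
  shows "plip (L * (1 + 2 * r * t) ^ n) ((V ^^ n) G)"
proof (induction n)
  case 0 then show ?case using assms by simp
next
  case (Suc n)
  have "plip (L * (1 + 2 * r * t) ^ n * (1 + 2 * r * t)) (V ((V ^^ n) G))"
    by (rule V_plip[OF Suc]) (use assms(2) H2_r H3_t in simp)
  then show ?case by (simp add: algebra_simps)
qed

lemma plip_fst: "lip L g \<Longrightarrow> L \<ge> 0 \<Longrightarrow> plip L (\<lambda>z w. g z)"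
  unfolding plip_def
proof (intro allI)
  fix z w z' w' assume "lip L g" "L \<ge> 0"
  have "\<bar>g z - g z'\<bar> \<le> L * dist z z'" by (rule lipD[OF \<open>lip L g\<close>])
  also have "\<dots> \<le> L * (dist z z' + dist w w')" using \<open>L \<ge> 0\<close> by (simp add: mult_left_mono)
  finally show "\<bar>g z - g z'\<bar> \<le> L * (dist z z' + dist w w')" .
qed

lemma plip_snd: "lip L g \<Longrightarrow> L \<ge> 0 \<Longrightarrow> plip L (\<lambda>z w. g w)"
  unfolding plip_def
proof (intro allI)
  fix z w z' w' assume "lip L g" "L \<ge> 0"
  have "\<bar>g w - g w'\<bar> \<le> L * dist w w'" by (rule lipD[OF \<open>lip L g\<close>])
  also have "\<dots> \<le> L * (dist z z' + dist w w')" using \<open>L \<ge> 0\<close> by (simp add: mult_left_mono)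
  finally show "\<bar>g w - g w'\<bar> \<le> L * (dist z z' + dist w w')" .
qed

lemma Vn_fst:
  assumes "lip L g" "L \<ge> 0"
  shows "(V ^^ n) (\<lambda>z w. g z) z w = (U ^^ n) g z"
proof (induction n arbitrary: z w)
  case 0 then show ?case by simp
next
  case (Suc n)
  have "(V ^^ Suc n) (\<lambda>z w. g z) z w = (\<integral>l. (V^^n) (\<lambda>z w. g z) (\<tau> l z) (\<tau> l w) \<partial>q z)"
    by (simp add: V_def[of "(V^^n) (\<lambda>z w. g z)"])
  also have "\<dots> = (\<integral>l. (U^^n) g (\<tau> l z) \<partial>q z)" using Suc by simp
  also have "\<dots> = (U ^^ Suc n) g z" by (simp add: U_def[of "(U^^n) g"])
  finally show ?case .
qed

end


context setting begin

lemma tau_seq_Nil[simp]: "tau_seq \<tau> [] x = x" by (simp add: tau_seq_def)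
lemma tau_seq_Cons[simp]: "tau_seq \<tau> (l # ls) x = tau_seq \<tau> ls (\<tau> l x)" by (simp add: tau_seq_def)

lemma V_Suc: "(V ^^ Suc n) G z w = (\<integral>l. (V^^n) G (\<tau> l z) (\<tau> l w) \<partial>q z)"
  by (simp add: V_def[of "(V^^n) G"])

lemma U_Suc: "(U ^^ Suc n) g z = (\<integral>l. (U^^n) g (\<tau> l z) \<partial>q z)"
  by (simp add: U_def[of "(U^^n) g"])

lemma bridge0:
  assumes "lip L g" "L \<ge> 0"
  shows "ennreal \<bar>(V^^n) (\<lambda>z w. g z) z w - (V^^n) (\<lambda>z w. g w) z w\<bar>
           \<le> P_int \<tau> q n z (\<lambda>ls. ennreal \<bar>g (tau_seq \<tau> ls z) - g (tau_seq \<tau> ls w)\<bar>)"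
proof (induction n arbitrary: z w)
  case 0 then show ?case by simp
next
  case (Suc n)
  define F where "F = (V^^n) (\<lambda>z w. g z)"
  define S where "S = (V^^n) (\<lambda>z w. g w)"
  have pF: "plip (L * (1 + 2 * r * t) ^ n) F" unfolding F_def by (rule Vn_plip[OF plip_fst[OF assms]]) (use assms in simp)
  have pS: "plip (L * (1 + 2 * r * t) ^ n) S" unfolding S_def by (rule Vn_plip[OF plip_snd[OF assms]]) (use assms in simp)
  have nn: "L * (1 + 2 * r * t) ^ n \<ge> 0" using assms H2_r H3_t by simp
  have iF: "integrable (q z) (\<lambda>l. F (\<tau> l z) (\<tau> l w))" by (rule q_int[OF plip_tau_l[OF pF nn]])
  have iS: "integrable (q z) (\<lambda>l. S (\<tau> l z) (\<tau> l w))" by (rule q_int[OF plip_tau_l[OF pS nn]])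
  have "(V^^Suc n) (\<lambda>z w. g z) z w - (V^^Suc n) (\<lambda>z w. g w) z w
        = (\<integral>l. F (\<tau> l z) (\<tau> l w) - S (\<tau> l z) (\<tau> l w) \<partial>q z)"
    unfolding V_Suc F_def[symmetric] S_def[symmetric] using iF iS by simp
  also have "\<bar>\<dots>\<bar> \<le> (\<integral>l. \<bar>F (\<tau> l z) (\<tau> l w) - S (\<tau> l z) (\<tau> l w)\<bar> \<partial>q z)"
    by (rule integral_abs_bound)
  finally have 1: "ennreal \<bar>(V^^Suc n) (\<lambda>z w. g z) z w - (V^^Suc n) (\<lambda>z w. g w) z w\<bar>
      \<le> ennreal (\<integral>l. \<bar>F (\<tau> l z) (\<tau> l w) - S (\<tau> l z) (\<tau> l w)\<bar> \<partial>q z)"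
    by (rule ennreal_leI)
  also have "\<dots> = (\<integral>\<^sup>+l. ennreal \<bar>F (\<tau> l z) (\<tau> l w) - S (\<tau> l z) (\<tau> l w)\<bar> \<partial>q z)"
    by (rule nn_integral_eq_integral[symmetric]) (use iF iS in auto)
  also have "\<dots> \<le> (\<integral>\<^sup>+l. P_int \<tau> q n (\<tau> l z) (\<lambda>ls. ennreal \<bar>g (tau_seq \<tau> ls (\<tau> l z)) - g (tau_seq \<tau> ls (\<tau> l w))\<bar>) \<partial>q z)"
    by (rule nn_integral_mono) (use Suc in \<open>simp add: F_def S_def\<close>)
  also have "\<dots> = P_int \<tau> q (Suc n) z (\<lambda>ls. ennreal \<bar>g (tau_seq \<tau> ls z) - g (tau_seq \<tau> ls w)\<bar>)"
    by simp
  finally show ?case .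
qed

lemma Un_scale: "(U^^n) (\<lambda>x. a * f x) = (\<lambda>x. a * (U^^n) f x)"
proof (induction n)
  case 0 then show ?case by simp
next
  case (Suc n) then show ?case by (simp add: U_scale[of a "(U^^n) f", symmetric])
qed

lemma V_scale: "V (\<lambda>z w. a * G z w) z w = a * V G z w"
  unfolding V_def by simp

lemma Vn_scale: "(V^^n) (\<lambda>z w. a * G z w) = (\<lambda>z w. a * (V^^n) G z w)"
proof (induction n)
  case 0 then show ?case by simp
next
  case (Suc n) then show ?case by (simp add: V_scale[of a "(V^^n) G", symmetric])
qed

lemma hybrid:
  assumes "lip L0 g" "L0 \<ge> 0" "\<And>j. j < k \<Longrightarrow> lip (Ls j) ((U^^j) g)" "\<And>j. j < k \<Longrightarrow> Ls j \<ge> 0"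
  shows "\<bar>(V^^k) (\<lambda>z w. g w) z w - (U^^k) g w\<bar> \<le> r * t * dist z w * (\<Sum>j<k. Ls j)"
  using assms(3,4)
proof (induction k arbitrary: z w)
  case 0 then show ?case by simp
next
  case (Suc k)
  define S where "S = (V^^k) (\<lambda>z w. g w)"
  define Uk where "Uk = (U^^k) g"
  have nn: "L0 * (1 + 2 * r * t) ^ k \<ge> 0" using assms H2_r H3_t by simp
  have pS: "plip (L0 * (1 + 2 * r * t) ^ k) S" unfolding S_def by (rule Vn_plip[OF plip_snd[OF assms(1,2)]]) (use assms in simp)
  have lS: "lip (2 * r * (L0 * (1 + 2 * r * t) ^ k)) (\<lambda>l. S (\<tau> l z) (\<tau> l w))" by (rule plip_tau_l[OF pS nn])
  have lk: "lip (Ls k) Uk" "Ls k \<ge> 0" using Suc.prems[of k] by (auto simp: Uk_def)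
  have lU: "lip (Ls k * r) (\<lambda>l. Uk (\<tau> l w))" by (rule lip_tau_l[OF lk])
  have iS: "integrable (q z) (\<lambda>l. S (\<tau> l z) (\<tau> l w))" by (rule q_int[OF lS])
  have iU: "integrable (q z) (\<lambda>l. Uk (\<tau> l w))" by (rule q_int[OF lU])
  have IH: "\<bar>S z' w' - Uk w'\<bar> \<le> r * t * dist z' w' * (\<Sum>j<k. Ls j)" for z' w'
    unfolding S_def Uk_def by (rule Suc.IH) (use Suc.prems in auto)
  have sp: "(\<Sum>j<k. Ls j) \<ge> 0" using Suc.prems by (intro sum_nonneg) auto
  have ld: "lip (2 * r * (L0 * (1 + 2 * r * t) ^ k) + \<bar>-1\<bar> * (Ls k * r)) (\<lambda>l. S (\<tau> l z) (\<tau> l w) + (-1) * Uk (\<tau> l w))"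
    by (intro lip_add lip_scale lS lU)
  have "(V^^Suc k) (\<lambda>z w. g w) z w - (U^^Suc k) g w
        = (\<integral>l. S (\<tau> l z) (\<tau> l w) - Uk (\<tau> l w) \<partial>q z) + ((\<integral>l. Uk (\<tau> l w) \<partial>q z) - (\<integral>l. Uk (\<tau> l w) \<partial>q w))"
    unfolding V_Suc U_Suc S_def[symmetric] Uk_def[symmetric] using iS iU by simp
  also have "\<bar>\<dots>\<bar> \<le> r * t * dist z w * (\<Sum>j<k. Ls j) + Ls k * r * t * dist z w"
  proof (rule order_trans[OF abs_triangle_ineq add_mono])
    show "\<bar>\<integral>l. S (\<tau> l z) (\<tau> l w) - Uk (\<tau> l w) \<partial>q z\<bar> \<le> r * t * dist z w * (\<Sum>j<k. Ls j)"
    proof (rule q_abs_bound)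
      show "lip (2 * r * (L0 * (1 + 2 * r * t) ^ k) + \<bar>-1\<bar> * (Ls k * r)) (\<lambda>l. S (\<tau> l z) (\<tau> l w) - Uk (\<tau> l w))"
        using ld by simp
      fix l
      have "\<bar>S (\<tau> l z) (\<tau> l w) - Uk (\<tau> l w)\<bar> \<le> r * t * dist (\<tau> l z) (\<tau> l w) * (\<Sum>j<k. Ls j)" by (rule IH)
      also have "\<dots> \<le> r * t * dist z w * (\<Sum>j<k. Ls j)"
        using W1 sp H2_r H3_t by (intro mult_right_mono mult_left_mono) auto
      finally show "\<bar>S (\<tau> l z) (\<tau> l w) - Uk (\<tau> l w)\<bar> \<le> r * t * dist z w * (\<Sum>j<k. Ls j)" .
    qed
    show "\<bar>(\<integral>l. Uk (\<tau> l w) \<partial>q z) - (\<integral>l. Uk (\<tau> l w) \<partial>q w)\<bar> \<le> Ls k * r * t * dist z w"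
      by (rule q_diff[OF lU]) (use lk H2_r in simp)
  qed
  also have "\<dots> = r * t * dist z w * (\<Sum>j<Suc k. Ls j)" by (simp add: algebra_simps)
  finally show ?case .
qed

lemma Mstep:
  assumes "lip L h" "L > 0" "\<Lambda> \<ge> 0" "\<And>j. j < M \<Longrightarrow> lip \<Lambda> ((U^^j) h)"
  shows "lip (s * L + r * t * real M * \<Lambda>) ((U^^M) h)"
proof (rule lipI)
  fix x y
  define f where "f = (\<lambda>x. h x / L)"
  have hf: "h = (\<lambda>x. L * f x)" using assms(2) by (auto simp: f_def)
  have lf: "lip 1 f" unfolding lip_def f_def
  proof (intro allI)
    fix x y
    have "\<bar>h x / L - h y / L\<bar> = \<bar>h x - h y\<bar> / L" using assms(2) by (simp add: diff_divide_distrib[symmetric])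
    also have "\<dots> \<le> L * dist x y / L" using lipD[OF assms(1), of x y] assms(2) by (intro divide_right_mono) auto
    finally show "\<bar>h x / L - h y / L\<bar> \<le> 1 * dist x y" using assms(2) by simp
  qed
  have fL: "f \<in> Lip1" using lf by (simp add: Lip1_def lip_def)
  have "ennreal \<bar>(V^^M) (\<lambda>z w. f z) x y - (V^^M) (\<lambda>z w. f w) x y\<bar> \<le> ennreal (s * dist x y)"
    using bridge0[OF lf, of M x y] MP1[OF fL, of x y] by simp
  then have b1: "\<bar>(V^^M) (\<lambda>z w. f z) x y - (V^^M) (\<lambda>z w. f w) x y\<bar> \<le> s * dist x y"
    using MP1_s by (subst (asm) ennreal_le_iff) auto
  have e1: "(V^^M) (\<lambda>z w. f z) x y = (U^^M) f x" by (rule Vn_fst[OF lf]) simp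
  have "(U^^M) h x - (V^^M) (\<lambda>z w. h w) x y = L * ((V^^M) (\<lambda>z w. f z) x y - (V^^M) (\<lambda>z w. f w) x y)"
    unfolding e1 hf Un_scale Vn_scale by (simp add: algebra_simps)
  then have p1: "\<bar>(U^^M) h x - (V^^M) (\<lambda>z w. h w) x y\<bar> \<le> L * (s * dist x y)"
    using b1 assms(2) by (simp add: abs_mult mult_left_mono)
  have p2: "\<bar>(V^^M) (\<lambda>z w. h w) x y - (U^^M) h y\<bar> \<le> r * t * dist x y * (\<Sum>j<M. \<Lambda>)"
    by (rule hybrid[OF assms(1) less_imp_le[OF assms(2)] assms(4) assms(3)])
  have "\<bar>(U^^M) h x - (U^^M) h y\<bar> \<le> L * (s * dist x y) + r * t * dist x y * (\<Sum>j<M. \<Lambda>)"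
    using p1 p2 by linarith
  then show "\<bar>(U^^M) h x - (U^^M) h y\<bar> \<le> (s * L + r * t * real M * \<Lambda>) * dist x y"
    by (simp add: algebra_simps)
qed

definition cc where "cc = s + r * real M * t"
definition BB where "BB = (1 + r * t) ^ M"

lemma cc_pos: "cc > 0" using MP1_s H2_r H3_t unfolding cc_def by (simp add: add_pos_nonneg)
lemma cc_lt1: "cc < 1" using contr unfolding cc_def .
lemma BB_pos: "BB > 0" unfolding BB_def using H2_r H3_t by (simp add: add_pos_nonneg)

lemma decay:
  shows "L > 0 \<Longrightarrow> lip L g \<Longrightarrow> lip (BB * cc ^ (n div M) * L) ((U^^n) g)"
proof (induction n arbitrary: g L rule: less_induct)
  case (less n)
  show ?case
  proof (cases "n < M")
    case True
    have "lip (L * (1 + r * t) ^ n) ((U^^n) g)" by (rule Un_lip[OF less.prems(2)]) (use less.prems in simp)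
    moreover have "L * (1 + r * t) ^ n \<le> BB * cc ^ (n div M) * L"
      unfolding BB_def using True less.prems(1) H2_r H3_t
      by (simp add: power_increasing)
    ultimately show ?thesis by (rule lip_mono)
  next
    case False
    then obtain m where n: "n = M + m" by (metis le_Suc_ex not_less)
    have mn: "m < n" using n MP1_M by simp
    define h where "h = (U^^m) g"
    define L' where "L' = BB * cc ^ (m div M) * L"
    have L'pos: "L' > 0" unfolding L'_def using BB_pos cc_pos less.prems(1) by simp
    have lh: "lip L' h" unfolding h_def L'_def by (rule less.IH[OF mn less.prems])
    have lj: "lip L' ((U^^j) h)" if "j < M" for j
    proof -
      have "(U^^j) h = (U^^(j + m)) g" by (simp add: h_def funpow_add)
      moreover have "lip (BB * cc ^ ((j + m) div M) * L) ((U^^(j + m)) g)"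
        by (rule less.IH) (use n that less.prems in auto)
      moreover have "BB * cc ^ ((j + m) div M) * L \<le> L'"
        unfolding L'_def using BB_pos cc_pos cc_lt1 less.prems(1)
        by (intro mult_right_mono mult_left_mono power_decreasing div_le_mono) auto
      ultimately show ?thesis using lip_mono by metis
    qed
    have "lip (s * L' + r * t * real M * L') ((U^^M) h)"
      by (rule Mstep[OF lh L'pos less_imp_le[OF L'pos] lj])
    moreover have "(U^^M) h = (U^^n) g" by (simp add: h_def n funpow_add)
    moreover have "s * L' + r * t * real M * L' = BB * cc ^ (n div M) * L"
    proof -
      have "n div M = Suc (m div M)" using n MP1_M by simp
      then show ?thesis unfolding L'_def cc_def by (simp add: algebra_simps)
    qed
    ultimately show ?thesis by simp
  qed
qed

end


lemma cauchy_shift_convergent: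
  fixes a :: "nat \<Rightarrow> real"
  assumes "\<And>m n. \<bar>a (m + n) - a n\<bar> \<le> e n" "e \<longlonglongrightarrow> 0"
  shows "convergent a"
proof -
  have "Cauchy a"
  proof (rule metric_CauchyI)
    fix \<epsilon> :: real assume "\<epsilon> > 0"
    then obtain N where N: "\<And>n. n \<ge> N \<Longrightarrow> \<bar>e n\<bar> < \<epsilon> / 2"
      using assms(2) unfolding lim_sequentially dist_real_def by (metis diff_zero half_gt_zero)
    show "\<exists>N. \<forall>m\<ge>N. \<forall>n\<ge>N. dist (a m) (a n) < \<epsilon>"
    proof (intro exI[of _ N] allI impI)
      fix m n assume "m \<ge> N" "n \<ge> N"
      have "\<bar>a m - a N\<bar> \<le> e N" using assms(1)[of "m - N" N] \<open>m \<ge> N\<close> by simp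
      moreover have "\<bar>a n - a N\<bar> \<le> e N" using assms(1)[of "n - N" N] \<open>n \<ge> N\<close> by simp
      moreover have "\<bar>e N\<bar> < \<epsilon> / 2" using N by simp
      ultimately show "dist (a m) (a n) < \<epsilon>" unfolding dist_real_def by linarith
    qed
  qed
  then show ?thesis by (simp add: Cauchy_convergent_iff)
qed

context setting begin

definition DX where "DX = (SOME D. D \<ge> 0 \<and> (\<forall>x y::'a. dist x y \<le> D))"

lemma DX: "DX \<ge> 0" "dist (x::'a) y \<le> DX"
proof -
  obtain D where "D \<ge> 0" "\<And>x y::'a. dist x y \<le> D" using compact_diam[OF X_compact] by blast
  then have "\<exists>D. D \<ge> 0 \<and> (\<forall>x y::'a. dist x y \<le> D)" by blast
  from someI_ex[OF this] show "DX \<ge> 0" "dist x y \<le> DX" unfolding DX_def by auto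
qed

definition om where "om L n = BB * cc ^ (n div M) * L * DX"

lemma osc:
  assumes "L > 0" "lip L g"
  shows "\<bar>(U^^n) g x - (U^^n) g y\<bar> \<le> om L n"
proof -
  have "\<bar>(U^^n) g x - (U^^n) g y\<bar> \<le> BB * cc ^ (n div M) * L * dist x y"
    by (rule lipD[OF decay[OF assms]])
  also have "\<dots> \<le> BB * cc ^ (n div M) * L * DX"
    using BB_pos cc_pos assms(1) DX by (intro mult_left_mono) auto
  finally show ?thesis unfolding om_def .
qed

lemma Um_bounds:
  assumes "lip K h" "K \<ge> 0" "\<And>y. a \<le> h y" "\<And>y. h y \<le> b"
  shows "a \<le> (U^^m) h z \<and> (U^^m) h z \<le> b"
proof (induction m arbitrary: z)
  case 0 then show ?case using assms by simp
next
  case (Suc m)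
  have l: "lip (K * (1 + r * t) ^ m) ((U^^m) h)" by (rule Un_lip[OF assms(1,2)])
  have nn: "K * (1 + r * t) ^ m \<ge> 0" using assms(2) H2_r H3_t by simp
  show ?case using U_bounds[OF l nn, of a b z] Suc by auto
qed

lemma shift_bound:
  assumes "L > 0" "lip L g"
  shows "\<bar>(U^^(m + n)) g z - (U^^n) g z\<bar> \<le> om L n"
proof -
  define h where "h = (U^^n) g"
  have l: "lip (L * (1 + r * t) ^ n) h" unfolding h_def by (rule Un_lip[OF assms(2)]) (use assms in simp)
  have nn: "L * (1 + r * t) ^ n \<ge> 0" using assms(1) H2_r H3_t by simp
  have b: "h z - om L n \<le> h y" "h y \<le> h z + om L n" for y
    using osc[OF assms, of n y z] unfolding h_def by auto
  have "(U^^(m + n)) g z = (U^^m) h z" by (simp add: h_def funpow_add)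
  moreover have "h z = (U^^n) g z" by (simp add: h_def)
  moreover have "h z - om L n \<le> (U^^m) h z" "(U^^m) h z \<le> h z + om L n"
    using Um_bounds[OF l nn b, of m z] by auto
  ultimately show ?thesis by linarith
qed

definition rho where "rho = root M cc"

lemma rho: "rho > 0" "rho < 1" "rho ^ M = cc"
  unfolding rho_def using cc_pos cc_lt1 MP1_M by (auto simp: real_root_pow_pos2 real_root_lt_1_iff)

lemma cc_pow_le: "cc ^ (n div M) \<le> rho ^ n / rho ^ M"
proof -
  have "cc ^ (n div M) * rho ^ M = rho ^ (M * (n div M) + M)"
    by (simp add: rho(3)[symmetric] power_mult power_add)
  also have "\<dots> \<le> rho ^ n"
  proof (rule power_decreasing)
    have "M * (n div M) + n mod M = n" by (rule mult_div_mod_eq)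
    moreover have "n mod M < M" using MP1_M by simp
    ultimately have "n < M * (n div M) + M" by linarith
    then show "n \<le> M * (n div M) + M" by simp
  qed (use rho in auto)
  finally have "cc ^ (n div M) * rho ^ M \<le> rho ^ n" .
  moreover have "rho ^ M > 0" using rho(1) by simp
  ultimately show ?thesis by (simp add: pos_le_divide_eq)
qed

lemma om_le: "L > 0 \<Longrightarrow> om L n \<le> (BB * L * DX / rho ^ M) * rho ^ n"
proof -
  assume "L > 0"
  have "om L n = (BB * L * DX) * cc ^ (n div M)" unfolding om_def by simp
  also have "\<dots> \<le> (BB * L * DX) * (rho ^ n / rho ^ M)"
    using BB_pos \<open>L > 0\<close> DX by (intro mult_left_mono cc_pow_le) auto
  finally show ?thesis by simp
qed

lemma om_nonneg: "L > 0 \<Longrightarrow> om L n \<ge> 0"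
  unfolding om_def using BB_pos cc_pos DX by simp

lemma om_lim: "L > 0 \<Longrightarrow> om L \<longlonglongrightarrow> 0"
proof -
  assume L: "L > 0"
  have "(\<lambda>n. (BB * L * DX / rho ^ M) * rho ^ n) \<longlonglongrightarrow> (BB * L * DX / rho ^ M) * 0"
    by (intro tendsto_mult tendsto_const LIMSEQ_power_zero) (use rho in auto)
  then have t: "(\<lambda>n. (BB * L * DX / rho ^ M) * rho ^ n) \<longlonglongrightarrow> 0" by simp
  have ev: "eventually (\<lambda>n. norm (om L n) \<le> (BB * L * DX / rho ^ M) * rho ^ n) sequentially"
  proof (intro always_eventually allI)
    fix n show "norm (om L n) \<le> (BB * L * DX / rho ^ M) * rho ^ n"
      using om_le[OF L, of n] om_nonneg[OF L, of n] by simp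
  qed
  show ?thesis
    by (rule Lim_null_comparison[OF ev t])
qed

definition cval where "cval g = lim (\<lambda>n. (U^^n) g undefined)"

lemma cval_conv:
  assumes "L > 0" "lip L g"
  shows "(\<lambda>n. (U^^n) g undefined) \<longlonglongrightarrow> cval g"
proof -
  have "convergent (\<lambda>n. (U^^n) g undefined)"
    by (rule cauchy_shift_convergent[OF shift_bound[OF assms] om_lim[OF assms(1)]])
  then show ?thesis unfolding cval_def by (simp add: convergent_LIMSEQ_iff)
qed

lemma cval_unif:
  assumes "L > 0" "lip L g"
  shows "\<bar>(U^^n) g z - cval g\<bar> \<le> 2 * om L n"
proof -
  have "(\<lambda>m. (U^^(m + n)) g undefined) \<longlonglongrightarrow> cval g"
    using LIMSEQ_ignore_initial_segment[OF cval_conv[OF assms], of n] by simp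
  then have lim: "(\<lambda>m. \<bar>(U^^n) g z - (U^^(m + n)) g undefined\<bar>) \<longlonglongrightarrow> \<bar>(U^^n) g z - cval g\<bar>"
    by (intro tendsto_rabs tendsto_diff tendsto_const)
  have bd: "\<bar>(U^^n) g z - (U^^(m + n)) g undefined\<bar> \<le> 2 * om L n" for m
  proof -
    have "\<bar>(U^^(m + n)) g undefined - (U^^n) g undefined\<bar> \<le> om L n" by (rule shift_bound[OF assms])
    moreover have "\<bar>(U^^n) g z - (U^^n) g undefined\<bar> \<le> om L n" by (rule osc[OF assms])
    ultimately show ?thesis by linarith
  qed
  show ?thesis by (rule LIMSEQ_le_const2[OF lim]) (use bd in blast)
qed

lemma cval_lim:
  assumes "lip L g"
  shows "(\<lambda>n. (U^^n) g z) \<longlonglongrightarrow> cval g"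
proof -
  obtain L' where L': "L' > 0" "lip L' g" using lip_nonneg_ex[OF assms] by blast
  have "(\<lambda>n. 2 * om L' n) \<longlonglongrightarrow> 2 * 0" by (intro tendsto_mult tendsto_const om_lim[OF L'(1)])
  then have t0: "(\<lambda>n. 2 * om L' n) \<longlonglongrightarrow> 0" by simp
  have ev: "eventually (\<lambda>n. norm ((U^^n) g z - cval g) \<le> 2 * om L' n) sequentially"
    using cval_unif[OF L'] by (intro always_eventually allI) simp
  have "(\<lambda>n. (U^^n) g z - cval g) \<longlonglongrightarrow> 0"
    by (rule Lim_null_comparison[OF ev t0])
  then show ?thesis by (simp add: LIM_zero_iff)
qed

lemma Un_add:
  assumes "lip L f" "lip K g" "L \<ge> 0" "K \<ge> 0"
  shows "(U^^n) (\<lambda>x. f x + g x) x = (U^^n) f x + (U^^n) g x"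
proof (induction n arbitrary: x)
  case 0 then show ?case by simp
next
  case (Suc n)
  have "(U^^n) (\<lambda>x. f x + g x) = (\<lambda>x. (U^^n) f x + (U^^n) g x)"
    using Suc by (intro ext) simp
  then have "(U^^Suc n) (\<lambda>x. f x + g x) x = U (\<lambda>x. (U^^n) f x + (U^^n) g x) x"
    by simp
  also have "\<dots> = U ((U^^n) f) x + U ((U^^n) g) x"
    by (rule U_add[OF Un_lip[OF assms(1,3)] Un_lip[OF assms(2,4)]]) (use assms H2_r H3_t in simp_all)
  finally show ?case by simp
qed

lemma Un_mono:
  assumes "lip L f" "lip K g" "L \<ge> 0" "K \<ge> 0" "\<And>x. f x \<le> g x"
  shows "(U^^n) f x \<le> (U^^n) g x"
proof (induction n arbitrary: x)
  case 0 then show ?case using assms by simp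
next
  case (Suc n)
  have "U ((U^^n) f) x \<le> U ((U^^n) g) x"
    by (rule U_mono[OF Un_lip[OF assms(1,3)] Un_lip[OF assms(2,4)]]) (use Suc assms H2_r H3_t in simp_all)
  then show ?case by simp
qed

lemma Un_const: "(U^^n) (\<lambda>_. c) x = c"
proof (induction n arbitrary: x)
  case 0 then show ?case by simp
next
  case (Suc n)
  have "(U^^n) (\<lambda>_. c) = (\<lambda>_. c)" using Suc by auto
  then show ?case by (simp add: U_const)
qed

lemma lip_ex_nonneg: "lip L f \<Longrightarrow> \<exists>K\<ge>0. lip K f"
  using lip_nonneg_ex by (meson less_imp_le)

lemma cval_add:
  assumes "lip L f" "lip K g"
  shows "cval (\<lambda>x. f x + g x) = cval f + cval g"
proof -
  obtain L' K' where L': "L' \<ge> 0" "lip L' f" and K': "K' \<ge> 0" "lip K' g"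
    using lip_ex_nonneg assms by metis
  have "(\<lambda>n. (U^^n) (\<lambda>x. f x + g x) undefined) \<longlonglongrightarrow> cval (\<lambda>x. f x + g x)"
    by (rule cval_lim[OF lip_add[OF assms]])
  moreover have "(\<lambda>n. (U^^n) (\<lambda>x. f x + g x) undefined) \<longlonglongrightarrow> cval f + cval g"
    unfolding Un_add[OF L'(2) K'(2) L'(1) K'(1)]
    by (intro tendsto_add cval_lim[OF assms(1)] cval_lim[OF assms(2)])
  ultimately show ?thesis by (rule LIMSEQ_unique)
qed

lemma cval_scale:
  assumes "lip L f"
  shows "cval (\<lambda>x. a * f x) = a * cval f"
proof -
  have "(\<lambda>n. (U^^n) (\<lambda>x. a * f x) undefined) \<longlonglongrightarrow> cval (\<lambda>x. a * f x)"
    by (rule cval_lim[OF lip_scale[OF assms]])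
  moreover have "(\<lambda>n. (U^^n) (\<lambda>x. a * f x) undefined) \<longlonglongrightarrow> a * cval f"
    unfolding Un_scale by (intro tendsto_mult tendsto_const cval_lim[OF assms])
  ultimately show ?thesis by (rule LIMSEQ_unique)
qed

lemma cval_mono:
  assumes "lip L f" "lip K g" "\<And>x. f x \<le> g x"
  shows "cval f \<le> cval g"
proof -
  obtain L' K' where L': "L' \<ge> 0" "lip L' f" and K': "K' \<ge> 0" "lip K' g"
    using lip_ex_nonneg assms by metis
  show ?thesis
    by (rule LIMSEQ_le[OF cval_lim[OF assms(1)] cval_lim[OF assms(2)]])
       (use Un_mono[OF L'(2) K'(2) L'(1) K'(1) assms(3)] in auto)
qed

lemma cval_const: "cval (\<lambda>_. c) = c"
proof -
  have "(\<lambda>n. (U^^n) (\<lambda>_. c) undefined) \<longlonglongrightarrow> cval (\<lambda>_. c)" by (rule cval_lim[OF lip_const])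
  then show ?thesis unfolding Un_const by (simp add: LIMSEQ_const_iff)
qed

lemma cval_U:
  assumes "lip L f" "L \<ge> 0"
  shows "cval (U f) = cval f"
proof -
  have "(\<lambda>n. (U^^n) (U f) undefined) \<longlonglongrightarrow> cval (U f)" by (rule cval_lim[OF U_lip[OF assms]])
  moreover have "(\<lambda>n. (U^^n) (U f) undefined) = (\<lambda>n. (U^^(Suc n)) f undefined)"
    by (simp add: funpow_Suc_right del: funpow.simps)
  moreover have "(\<lambda>n. (U^^(Suc n)) f undefined) \<longlonglongrightarrow> cval f"
    using LIMSEQ_Suc[OF cval_lim[OF assms(1)]] .
  ultimately show ?thesis using LIMSEQ_unique by metis
qed

end


definition hU :: "'b::metric_space set \<Rightarrow> nat \<Rightarrow> 'b \<Rightarrow> real" where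
  "hU A n y = min 1 (real n * infdist y (- A))"

lemma hU_lip: "lip (real n) (hU A n)"
proof (rule lipI)
  fix x y
  have "real n * infdist x (- A) - real n * infdist y (- A) = real n * (infdist x (- A) - infdist y (- A))"
    by (simp add: right_diff_distrib)
  then have "\<bar>real n * infdist x (- A) - real n * infdist y (- A)\<bar> = real n * \<bar>infdist x (- A) - infdist y (- A)\<bar>"
    by (simp add: abs_mult)
  also have "\<dots> \<le> real n * dist x y" by (intro mult_left_mono infdist_triangle_abs) auto
  finally have "\<bar>real n * infdist x (- A) - real n * infdist y (- A)\<bar> \<le> real n * dist x y" .
  then show "\<bar>hU A n x - hU A n y\<bar> \<le> real n * dist x y"
    unfolding hU_def by linarith
qed

lemma hU_nonneg: "0 \<le> hU A n y" unfolding hU_def by (simp add: infdist_nonneg)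

lemma hU_le1: "hU A n y \<le> 1" unfolding hU_def by simp

lemma hU_inc: "incseq (\<lambda>n y. ennreal (hU A n y))"
  unfolding incseq_def le_fun_def
proof (intro allI impI)
  fix m n :: nat and y assume "m \<le> n"
  have "real m * infdist y (- A) \<le> real n * infdist y (- A)"
    using \<open>m \<le> n\<close> by (intro mult_right_mono) (simp_all add: infdist_nonneg)
  then have "hU A m y \<le> hU A n y" unfolding hU_def by linarith
  then show "ennreal (hU A m y) \<le> ennreal (hU A n y)" by (rule ennreal_leI)
qed

lemma hU_SUP:
  assumes "open A" "A \<noteq> UNIV"
  shows "(SUP n. ennreal (hU A n y)) = indicator A y"
proof (cases "y \<in> A")
  case True
  have cl: "closed (- A)" "- A \<noteq> {}" "y \<notin> - A" using assms True by auto
  then have d: "infdist y (- A) > 0" by (rule infdist_pos_not_in_closed)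
  obtain n :: nat where n: "1 / infdist y (- A) < real n" using reals_Archimedean2 by blast
  then have "1 \<le> real n * infdist y (- A)" using d by (simp add: field_simps)
  then have "hU A n y = 1" unfolding hU_def by simp
  then have "(SUP n. ennreal (hU A n y)) \<ge> 1" by (metis SUP_upper UNIV_I ennreal_1)
  moreover have "(SUP n. ennreal (hU A n y)) \<le> 1" by (intro SUP_least) (simp add: hU_le1)
  ultimately show ?thesis using True by simp
next
  case False
  then have "hU A n y = 0" for n unfolding hU_def by simp
  then show ?thesis using False by simp
qed

lemma emeasure_open_SUP:
  assumes "compact (UNIV :: 'b::metric_space set)" "\<mu> \<in> prob_measures" "open A" "A \<noteq> UNIV"
  shows "emeasure \<mu> (A :: 'b set) = (SUP n. ennreal (\<integral>y. hU A n y \<partial>\<mu>))"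
proof -
  have sA: "A \<in> sets \<mu>" using prob_measuresD(2)[OF assms(2)] assms(3) by simp
  have "emeasure \<mu> A = (\<integral>\<^sup>+y. indicator A y \<partial>\<mu>)" using sA by simp
  also have "\<dots> = (\<integral>\<^sup>+y. (SUP n. ennreal (hU A n y)) \<partial>\<mu>)" using hU_SUP[OF assms(3,4)] by simp
  also have "\<dots> = (SUP n. (\<integral>\<^sup>+y. ennreal (hU A n y) \<partial>\<mu>))"
    by (rule nn_integral_monotone_convergence_SUP[OF hU_inc])
       (use lip_meas_mu[OF assms(2) hU_lip] in measurable)
  also have "\<dots> = (SUP n. ennreal (\<integral>y. hU A n y \<partial>\<mu>))"
    by (intro SUP_cong refl nn_integral_eq_integral lip_integrable[OF assms(1,2) hU_lip])
       (simp add: hU_nonneg)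
  finally show ?thesis .
qed

lemma prob_measures_eqI:
  assumes "compact (UNIV :: 'b::metric_space set)" "\<mu> \<in> prob_measures" "\<nu> \<in> prob_measures"
    and "\<And>L f. lip L f \<Longrightarrow> (\<integral>y. f y \<partial>\<mu>) = (\<integral>y. f y \<partial>(\<nu> :: 'b measure))"
  shows "\<mu> = \<nu>"
proof (rule measure_eqI_generator_eq[where E="{S. open S}" and \<Omega>=UNIV and A="\<lambda>_. UNIV"])
  show "Int_stable {S::'b set. open S}" by (auto simp: Int_stable_def)
  show "{S::'b set. open S} \<subseteq> Pow UNIV" by simp
  show "sets \<mu> = sigma_sets UNIV {S. open S}" using prob_measuresD(2)[OF assms(2)] by (simp add: sets_borel)
  show "sets \<nu> = sigma_sets UNIV {S. open S}" using prob_measuresD(2)[OF assms(3)] by (simp add: sets_borel)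
  show "range (\<lambda>_. UNIV) \<subseteq> {S::'b set. open S}" by simp
  show "(\<Union>i. UNIV) = (UNIV :: 'b set)" by simp
  show "emeasure \<mu> UNIV \<noteq> \<infinity>"
    using prob_space.emeasure_space_1[OF prob_measuresD(1)[OF assms(2)]] prob_measuresD(3)[OF assms(2)] by simp
  fix X assume "X \<in> {S::'b set. open S}"
  then have X: "open X" by simp
  show "emeasure \<mu> X = emeasure \<nu> X"
  proof (cases "X = UNIV")
    case True
    then show ?thesis
      using prob_space.emeasure_space_1[OF prob_measuresD(1)[OF assms(2)]] prob_measuresD(3)[OF assms(2)]
        prob_space.emeasure_space_1[OF prob_measuresD(1)[OF assms(3)]] prob_measuresD(3)[OF assms(3)] by simp
  next
    case False
    show ?thesis unfolding emeasure_open_SUP[OF assms(1,2) X False] emeasure_open_SUP[OF assms(1,3) X False]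
      using assms(4)[OF hU_lip] by simp
  qed
qed

context setting begin

lemma tau_l_cont: "continuous_on UNIV (\<lambda>l. \<tau> l x)"
  unfolding continuous_on_iff
proof (intro ballI allI impI)
  fix l and e :: real assume "0 < e"
  show "\<exists>d>0. \<forall>l'\<in>UNIV. dist l' l < d \<longrightarrow> dist (\<tau> l' x) (\<tau> l x) < e"
  proof (intro exI[of _ "e / (r + 1)"] conjI ballI impI)
    show "0 < e / (r + 1)" using \<open>0 < e\<close> H2_r by simp
    fix l' assume "dist l' l < e / (r + 1)"
    then have "(r + 1) * dist l' l < e" using H2_r by (simp add: field_simps)
    moreover have "dist (\<tau> l' x) (\<tau> l x) \<le> r * dist l' l" by (rule H2)
    moreover have "r * dist l' l \<le> (r + 1) * dist l' l" by (simp add: mult_right_mono)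
    ultimately show "dist (\<tau> l' x) (\<tau> l x) < e" by linarith
  qed
qed

lemma tau_l_meas: "(\<lambda>l. \<tau> l x) \<in> measurable (q x) borel"
  using measurable_cong_sets[OF prob_measuresD(2)[OF q_prob] refl] borel_measurable_continuous_onI[OF tau_l_cont]
  by blast

definition K where "K x = distr (q x) borel (\<lambda>l. \<tau> l x)"

lemma K_prob: "K x \<in> prob_measures"
  unfolding prob_measures_def K_def
  using prob_space.prob_space_distr[OF q_ps tau_l_meas] by simp

lemma K_int: "lip L f \<Longrightarrow> (\<integral>y. f y \<partial>K x) = U f x"
  unfolding K_def U_def by (rule integral_distr[OF tau_l_meas]) (rule lip_meas)

lemma K_meas: "K \<in> measurable borel (subprob_algebra borel)"
proof (rule measurable_subprob_algebra_generated[where G="{S. open S}" and \<Omega>=UNIV])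
  show "sets (borel :: 'a measure) = sigma_sets UNIV {S. open S}" by (simp add: sets_borel)
  show "Int_stable {S::'a set. open S}" by (auto simp: Int_stable_def)
  show "{S::'a set. open S} \<subseteq> Pow UNIV" by simp
  fix a show "subprob_space (K a)" using prob_measuresD(1)[OF K_prob] by (simp add: prob_space_imp_subprob_space)
  show "sets (K a) = sets borel" using prob_measuresD(2)[OF K_prob] .
next
  have "emeasure (K a) UNIV = 1" for a
    using prob_space.emeasure_space_1[OF prob_measuresD(1)[OF K_prob]] prob_measuresD(3)[OF K_prob] by simp
  then show "(\<lambda>a. emeasure (K a) UNIV) \<in> borel_measurable borel" by simp
next
  fix A :: "'a set" assume "A \<in> {S. open S}"
  then have A: "open A" by simp
  show "(\<lambda>a. emeasure (K a) A) \<in> borel_measurable borel"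
  proof (cases "A = UNIV")
    case True
    have "emeasure (K a) UNIV = 1" for a
      using prob_space.emeasure_space_1[OF prob_measuresD(1)[OF K_prob]] prob_measuresD(3)[OF K_prob] by simp
    then show ?thesis using True by simp
  next
    case False
    have "(\<lambda>a. emeasure (K a) A) = (\<lambda>a. SUP n. ennreal (U (hU A n) a))"
      by (intro ext, subst emeasure_open_SUP[OF X_compact K_prob A False]) (simp add: K_int[OF hU_lip])
    moreover have "(\<lambda>a. SUP n. ennreal (U (hU A n) a)) \<in> borel_measurable borel"
    proof (rule borel_measurable_SUP)
      show "countable (UNIV :: nat set)" by simp
      fix n
      have "U (hU A n) \<in> borel_measurable borel"
        by (rule lip_meas[OF U_lip[OF hU_lip]]) simp
      then show "(\<lambda>a. ennreal (U (hU A n) a)) \<in> borel_measurable borel" by measurable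
    qed
    ultimately show ?thesis by simp
  qed
qed

lemma Tq_eq: "Tq \<tau> q \<mu> = \<mu> \<bind> K"
  unfolding Tq_def K_def by simp

lemma Tq_prob:
  assumes "\<mu> \<in> prob_measures"
  shows "Tq \<tau> q \<mu> \<in> prob_measures"
proof -
  interpret prob_space \<mu> using prob_measuresD(1)[OF assms] .
  have Km: "K \<in> measurable \<mu> (subprob_algebra borel)"
    using measurable_cong_sets[OF prob_measuresD(2)[OF assms] refl] K_meas by blast
  have "prob_space (\<mu> \<bind> K)"
    by (rule prob_space_bind[OF _ Km]) (simp add: prob_measuresD(1)[OF K_prob])
  moreover have "sets (\<mu> \<bind> K) = sets borel"
    by (rule sets_bind) (auto simp: prob_measuresD(2)[OF K_prob] not_empty)
  ultimately show ?thesis unfolding Tq_eq prob_measures_def by simp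
qed

lemma Tq_int:
  assumes "\<mu> \<in> prob_measures" "lip L f"
  shows "(\<integral>y. f y \<partial>Tq \<tau> q \<mu>) = (\<integral>x. U f x \<partial>\<mu>)"
proof -
  interpret prob_space \<mu> using prob_measuresD(1)[OF assms(1)] .
  have Km: "K \<in> measurable \<mu> (subprob_algebra borel)"
    using measurable_cong_sets[OF prob_measuresD(2)[OF assms(1)] refl] K_meas by blast
  obtain B where B: "\<And>x. \<bar>f x\<bar> \<le> B" using lip_bounded[OF X_compact assms(2)] by blast
  have "(\<integral>y. f y \<partial>(\<mu> \<bind> K)) = (\<integral>x. (\<integral>y. f y \<partial>K x) \<partial>\<mu>)"
  proof (rule integral_bind[where B=B and B'=1 and K=borel])
    show "f \<in> borel_measurable borel" by (rule lip_meas[OF assms(2)])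
    show "\<And>x. x \<in> space borel \<Longrightarrow> \<bar>f x\<bar> \<le> B" using B by blast
    show "K \<in> measurable \<mu> (subprob_algebra borel)" by (rule Km)
    show "finite_measure \<mu>" by (rule finite_measure_axioms)
    show "AE x in \<mu>. emeasure (K x) (space (K x)) \<le> ennreal 1"
      using prob_space.emeasure_space_1[OF prob_measuresD(1)[OF K_prob]] by simp
  qed
  also have "\<dots> = (\<integral>x. U f x \<partial>\<mu>)" by (simp add: K_int[OF assms(2)])
  finally show ?thesis unfolding Tq_eq .
qed

lemma Tqn:
  assumes "\<mu> \<in> prob_measures"
  shows "(Tq \<tau> q ^^ k) \<mu> \<in> prob_measures"
  by (induction k) (simp_all add: assms Tq_prob)

lemma Tqn_int:
  assumes "\<mu> \<in> prob_measures" "lip L f" "L \<ge> 0"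
  shows "(\<integral>y. f y \<partial>(Tq \<tau> q ^^ k) \<mu>) = (\<integral>x. (U^^k) f x \<partial>\<mu>)"
  using assms(2,3)
proof (induction k arbitrary: f L)
  case 0 then show ?case by simp
next
  case (Suc k)
  have "(\<integral>y. f y \<partial>(Tq \<tau> q ^^ Suc k) \<mu>) = (\<integral>x. U f x \<partial>(Tq \<tau> q ^^ k) \<mu>)"
    using Tq_int[OF Tqn[OF assms(1)] Suc.prems(1)] by simp
  also have "\<dots> = (\<integral>x. (U^^k) (U f) x \<partial>\<mu>)"
    by (rule Suc.IH[OF U_lip[OF Suc.prems]]) (use Suc.prems H2_r H3_t in simp)
  also have "\<dots> = (\<integral>x. (U^^Suc k) f x \<partial>\<mu>)" by (simp add: funpow_Suc_right del: funpow.simps)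
  finally show ?case .
qed

end


definition lipx :: "('b::metric_space \<Rightarrow> real) \<Rightarrow> bool" where
  "lipx f \<longleftrightarrow> (\<exists>L. lip L f)"

lemma lipxI: "lip L f \<Longrightarrow> lipx f" unfolding lipx_def by blast

lemma lipx_const: "lipx (\<lambda>x. c)" using lip_const lipxI by blast

lemma lipx_add: "lipx f \<Longrightarrow> lipx g \<Longrightarrow> lipx (\<lambda>x. f x + g x)"
  unfolding lipx_def using lip_add by blast

lemma lipx_scale: "lipx f \<Longrightarrow> lipx (\<lambda>x. a * f x)"
  unfolding lipx_def using lip_scale by blast

lemma lipx_diff: "lipx f \<Longrightarrow> lipx g \<Longrightarrow> lipx (\<lambda>x. f x - g x)"
  using lipx_add[of f "\<lambda>x. (-1) * g x"] lipx_scale[of g "-1"] by simp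

lemma lipx_sum: "finite I \<Longrightarrow> (\<And>i. i \<in> I \<Longrightarrow> lipx (f i)) \<Longrightarrow> lipx (\<lambda>x. \<Sum>i\<in>I. f i x)"
proof (induction I rule: finite_induct)
  case empty then show ?case by (simp add: lipx_const)
next
  case (insert a I) then show ?case by (simp add: lipx_add)
qed

lemma lipx_bounded:
  assumes "compact (UNIV :: 'b::metric_space set)" "lipx (f :: 'b \<Rightarrow> real)"
  obtains B where "B \<ge> 0" "\<And>x. \<bar>f x\<bar> \<le> B"
proof -
  obtain L where "lip L f" using assms(2) lipx_def by blast
  then obtain B where "\<And>x. \<bar>f x\<bar> \<le> B" using lip_bounded[OF assms(1)] by blast
  moreover then have "B \<ge> 0" using abs_ge_zero order_trans by blast
  ultimately show ?thesis using that by blast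
qed

lemma lipx_mult:
  assumes "compact (UNIV :: 'b::metric_space set)" "lipx (f :: 'b \<Rightarrow> real)" "lipx g"
  shows "lipx (\<lambda>x. f x * g x)"
proof -
  obtain L K where L: "lip L f" and K: "lip K g" using assms(2,3) lipx_def by blast
  obtain A where A: "A \<ge> 0" "\<And>x. \<bar>f x\<bar> \<le> A" using lipx_bounded[OF assms(1,2)] by blast
  obtain B where B: "B \<ge> 0" "\<And>x. \<bar>g x\<bar> \<le> B" using lipx_bounded[OF assms(1,3)] by blast
  have "lip (A * \<bar>K\<bar> + B * \<bar>L\<bar>) (\<lambda>x. f x * g x)"
  proof (rule lipI)
    fix x y
    have "f x * g x - f y * g y = f x * (g x - g y) + g y * (f x - f y)" by (simp add: algebra_simps)
    also have "\<bar>\<dots>\<bar> \<le> \<bar>f x\<bar> * \<bar>g x - g y\<bar> + \<bar>g y\<bar> * \<bar>f x - f y\<bar>"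
      by (metis abs_mult abs_triangle_ineq)
    also have "\<dots> \<le> A * (\<bar>K\<bar> * dist x y) + B * (\<bar>L\<bar> * dist x y)"
    proof (intro add_mono mult_mono)
      show "\<bar>g x - g y\<bar> \<le> \<bar>K\<bar> * dist x y" using lipD[OF K, of x y]
        by (meson abs_ge_self mult_right_mono order_trans zero_le_dist)
      show "\<bar>f x - f y\<bar> \<le> \<bar>L\<bar> * dist x y" using lipD[OF L, of x y]
        by (meson abs_ge_self mult_right_mono order_trans zero_le_dist)
    qed (use A B in auto)
    finally show "\<bar>f x * g x - f y * g y\<bar> \<le> (A * \<bar>K\<bar> + B * \<bar>L\<bar>) * dist x y" by (simp add: algebra_simps)
  qed
  then show ?thesis by (rule lipxI)
qed

lemma lipx_inverse:
  assumes "lipx (g :: 'b::metric_space \<Rightarrow> real)" "e > 0" "\<And>x. g x \<ge> e"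
  shows "lipx (\<lambda>x. 1 / g x)"
proof -
  obtain K where K: "lip K g" using assms(1) lipx_def by blast
  have "lip (\<bar>K\<bar> / e^2) (\<lambda>x. 1 / g x)"
  proof (rule lipI)
    fix x y
    have gx: "g x \<ge> e" and gy: "g y \<ge> e" using assms(3) by auto
    then have pos: "g x > 0" "g y > 0" using assms(2) by auto
    have "1 / g x - 1 / g y = (g y - g x) / (g x * g y)" using pos by (simp add: field_simps)
    then have "\<bar>1 / g x - 1 / g y\<bar> = \<bar>g y - g x\<bar> / (g x * g y)" using pos by (simp add: abs_div)
    also have "\<dots> \<le> \<bar>g y - g x\<bar> / e^2"
    proof (rule divide_left_mono)
      show "e^2 \<le> g x * g y" unfolding power2_eq_square using gx gy assms(2) by (intro mult_mono) auto
    qed (use assms(2) pos in auto)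
    also have "\<dots> \<le> (\<bar>K\<bar> * dist x y) / e^2"
    proof (rule divide_right_mono)
      show "\<bar>g y - g x\<bar> \<le> \<bar>K\<bar> * dist x y" using lipD[OF K, of y x]
        by (metis abs_ge_self dist_commute mult_right_mono order_trans zero_le_dist)
    qed simp
    finally show "\<bar>1 / g x - 1 / g y\<bar> \<le> \<bar>K\<bar> / e^2 * dist x y" by simp
  qed
  then show ?thesis by (rule lipxI)
qed

lemma lipx_div:
  assumes "compact (UNIV :: 'b::metric_space set)" "lipx (f :: 'b \<Rightarrow> real)" "lipx g" "e > 0" "\<And>x. g x \<ge> e"
  shows "lipx (\<lambda>x. f x / g x)"
  using lipx_mult[OF assms(1,2) lipx_inverse[OF assms(3-5)]] by simp

lemma lipx_psi: "lipx (\<lambda>x. max 0 (c - dist x (y::'b::metric_space)))"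
proof -
  have "lip 1 (\<lambda>x. max 0 (c - dist x y))"
  proof (rule lipI)
    fix a b
    have "\<bar>dist a y - dist b y\<bar> \<le> dist a b" using abs_dist_diff_le[of a y b] by (simp add: dist_commute)
    then show "\<bar>max 0 (c - dist a y) - max 0 (c - dist b y)\<bar> \<le> 1 * dist a b" by linarith
  qed
  then show ?thesis by (rule lipxI)
qed



lemma nets_ex0:
  assumes cpt: "compact (UNIV::'b::metric_space set)" and e: "(e::real) > 0"
  shows "\<exists>ys. ys \<noteq> [] \<and> (\<forall>x::'b. \<exists>i<length ys. dist x (ys!i) < e)"
proof -
  have "\<exists>C. finite C \<and> C \<subseteq> UNIV \<and> UNIV \<subseteq> (\<Union>y\<in>C. ball (y::'b) e)"
    using seq_compact_imp_totally_bounded[OF compact_imp_seq_compact[OF cpt]] e by blast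
  then obtain C where C: "finite C" "UNIV \<subseteq> (\<Union>y\<in>C. ball (y::'b) e)" by blast
  obtain ys where ys: "set ys = C" using finite_list[OF C(1)] by blast
  have ex: "\<exists>i<length ys. dist x (ys!i) < e" for x
  proof -
    have "x \<in> (\<Union>y\<in>C. ball y e)" using C(2) by blast
    then obtain y where y: "y \<in> C" "dist y x < e" by auto
    then have "y \<in> set ys" using ys by simp
    then obtain i where i: "i < length ys" "ys ! i = y" by (meson in_set_conv_nth)
    have "dist x (ys ! i) < e" using i(2) y(2) by (simp add: dist_commute)
    then show ?thesis using i(1) by blast
  qed
  have "ys \<noteq> []"
  proof
    assume "ys = []" then show False using ex[of undefined] by simp
  qed
  then show ?thesis using ex by blast
qed

locale riesz_loc =
  fixes \<Phi> :: "('b::metric_space \<Rightarrow> real) \<Rightarrow> real"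
  assumes cpt: "compact (UNIV::'b set)"
   and Padd0: "\<And>f g L K. lip L f \<Longrightarrow> lip K g \<Longrightarrow> \<Phi> (\<lambda>x. f x + g x) = \<Phi> f + \<Phi> g"
   and Pscale0: "\<And>f L a. lip L f \<Longrightarrow> \<Phi> (\<lambda>x. a * f x) = a * \<Phi> f"
   and Pmono0: "\<And>f g L K. lip L f \<Longrightarrow> lip K g \<Longrightarrow> (\<And>x. f x \<le> g x) \<Longrightarrow> \<Phi> f \<le> \<Phi> g"
   and Pone: "\<Phi> (\<lambda>x. 1) = 1"
begin

lemma Padd: "lipx f \<Longrightarrow> lipx g \<Longrightarrow> \<Phi> (\<lambda>x. f x + g x) = \<Phi> f + \<Phi> g"
  unfolding lipx_def using Padd0 by blast

lemma Pscale: "lipx f \<Longrightarrow> \<Phi> (\<lambda>x. a * f x) = a * \<Phi> f"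
  unfolding lipx_def using Pscale0 by blast

lemma Pmono: "lipx f \<Longrightarrow> lipx g \<Longrightarrow> (\<And>x. f x \<le> g x) \<Longrightarrow> \<Phi> f \<le> \<Phi> g"
  unfolding lipx_def using Pmono0 by blast

lemma Pconst: "\<Phi> (\<lambda>x. c) = c"
  using Pscale[OF lipx_const, of c 1] Pone by simp

lemma Psum: "finite I \<Longrightarrow> (\<And>i. i \<in> I \<Longrightarrow> lipx (f i)) \<Longrightarrow> \<Phi> (\<lambda>x. \<Sum>i\<in>I. f i x) = (\<Sum>i\<in>I. \<Phi> (f i))"
proof (induction I rule: finite_induct)
  case empty then show ?case by (simp add: Pconst)
next
  case (insert a I)
  have "\<Phi> (\<lambda>x. \<Sum>i\<in>insert a I. f i x) = \<Phi> (\<lambda>x. f a x + (\<Sum>i\<in>I. f i x))" using insert by simp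
  also have "\<dots> = \<Phi> (f a) + \<Phi> (\<lambda>x. \<Sum>i\<in>I. f i x)"
    by (rule Padd) (use insert in \<open>auto intro: lipx_sum\<close>)
  finally show ?case using insert by simp
qed

lemma Padd_const: "lipx f \<Longrightarrow> \<Phi> (\<lambda>x. f x + c) = \<Phi> f + c"
  using Padd[OF _ lipx_const, of f c] Pconst by simp

definition eps :: "nat \<Rightarrow> real" where "eps k = 1 / real (Suc k)"

lemma eps_pos: "eps k > 0" unfolding eps_def by simp

lemma nets_ex: "\<exists>ys. ys \<noteq> [] \<and> (\<forall>x::'b. \<exists>i<length ys. dist x (ys!i) < eps k)"
  by (rule nets_ex0[OF cpt eps_pos])

definition ys :: "nat \<Rightarrow> 'b list" where
  "ys k = (SOME ys. ys \<noteq> [] \<and> (\<forall>x::'b. \<exists>i<length ys. dist x (ys!i) < eps k))"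


lemma ys_prop: "ys k \<noteq> []" "\<exists>i<length (ys k). dist x (ys k ! i) < eps k"
  using someI_ex[OF nets_ex[of k]] unfolding ys_def[symmetric] by auto

definition psi :: "nat \<Rightarrow> nat \<Rightarrow> 'b \<Rightarrow> real" where
  "psi k i x = max 0 (2 * eps k - dist x (ys k ! i))"

definition Ssum :: "nat \<Rightarrow> 'b \<Rightarrow> real" where
  "Ssum k x = (\<Sum>i<length (ys k). psi k i x)"

definition phi :: "nat \<Rightarrow> nat \<Rightarrow> 'b \<Rightarrow> real" where
  "phi k i x = psi k i x / Ssum k x"

lemma psi_nonneg: "psi k i x \<ge> 0" unfolding psi_def by simp

lemma Ssum_ge: "Ssum k x \<ge> eps k"
proof -
  obtain i where i: "i < length (ys k)" "dist x (ys k ! i) < eps k" using ys_prop by blast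
  have "eps k \<le> psi k i x" unfolding psi_def using i(2) by simp
  also have "\<dots> \<le> Ssum k x" unfolding Ssum_def
    by (rule member_le_sum) (use i(1) psi_nonneg in auto)
  finally show ?thesis .
qed

lemma Ssum_pos: "Ssum k x > 0" using Ssum_ge eps_pos less_le_trans by blast

lemma phi_nonneg: "phi k i x \<ge> 0" unfolding phi_def using psi_nonneg[of k i x] Ssum_pos[of k x] by simp

lemma phi_sum: "(\<Sum>i<length (ys k). phi k i x) = 1"
  unfolding phi_def using Ssum_pos[of k x] by (simp add: sum_divide_distrib[symmetric] Ssum_def)

lemma phi_pos_dist: "phi k i x > 0 \<Longrightarrow> dist x (ys k ! i) < 2 * eps k"
  unfolding phi_def psi_def using Ssum_pos[of k x]
  by (cases "2 * eps k - dist x (ys k ! i) > 0") (auto simp: zero_less_divide_iff)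

lemma lipx_phi: "lipx (phi k i)"
  unfolding phi_def[abs_def]
proof (rule lipx_div[OF cpt _ _ eps_pos Ssum_ge])
  show "lipx (psi k i)" unfolding psi_def[abs_def] by (rule lipx_psi)
  show "lipx (Ssum k)" unfolding Ssum_def[abs_def] psi_def by (intro lipx_sum lipx_psi) auto
qed

primrec Pi :: "nat list \<Rightarrow> 'b \<Rightarrow> real" where
  "Pi [] x = 1"
| "Pi (i # w) x = phi (length w) i x * Pi w x"

primrec W :: "nat \<Rightarrow> nat list set" where
  "W 0 = {[]}"
| "W (Suc k) = (\<lambda>(i, w). i # w) ` ({..<length (ys k)} \<times> W k)"

lemma W_finite: "finite (W k)" by (induction k) auto

lemma W_length: "w \<in> W k \<Longrightarrow> length w = k"
  by (induction k arbitrary: w) auto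

lemma W_Cons: "i # w \<in> W (Suc k) \<longleftrightarrow> i < length (ys k) \<and> w \<in> W k" by auto

lemma W_SucE: "v \<in> W (Suc k) \<Longrightarrow> (\<And>i w. v = i # w \<Longrightarrow> i < length (ys k) \<Longrightarrow> w \<in> W k \<Longrightarrow> P) \<Longrightarrow> P"
  by auto

lemma Pi_nonneg: "Pi w x \<ge> 0"
  by (induction w) (simp_all add: phi_nonneg)

lemma lipx_Pi: "lipx (Pi w)"
proof (induction w)
  case Nil then show ?case by (simp add: lipx_const)
next
  case (Cons i w)
  have "lipx (\<lambda>x. phi (length w) i x * Pi w x)" by (rule lipx_mult[OF cpt lipx_phi Cons])
  moreover have "Pi (i # w) = (\<lambda>x. phi (length w) i x * Pi w x)" by (rule ext) simp
  ultimately show ?case by simp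
qed

lemma Pi_children: "(\<Sum>i<length (ys (length w)). Pi (i # w) x) = Pi w x"
  by (simp add: sum_distrib_right[symmetric] phi_sum)

lemma Pi_total: "(\<Sum>w\<in>W k. Pi w x) = 1"
proof (induction k)
  case 0 then show ?case by simp
next
  case (Suc k)
  have inj: "inj_on (\<lambda>(i, w). i # w) ({..<length (ys k)} \<times> W k)" by (auto simp: inj_on_def)
  have "(\<Sum>w\<in>W (Suc k). Pi w x) = (\<Sum>(i, w)\<in>{..<length (ys k)} \<times> W k. phi k i x * Pi w x)"
    by (rule sum.reindex_cong[OF inj]) (auto simp: W_length)
  also have "\<dots> = (\<Sum>i<length (ys k). \<Sum>w\<in>W k. phi k i x * Pi w x)"
    by (rule sum.cartesian_product[symmetric])
  also have "\<dots> = (\<Sum>i<length (ys k). phi k i x)" by (simp add: sum_distrib_left[symmetric] Suc)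
  also have "\<dots> = 1" by (rule phi_sum)
  finally show ?case .
qed

definition p :: "nat list \<Rightarrow> real" where "p w = \<Phi> (Pi w)"

lemma p_nonneg: "p w \<ge> 0"
  unfolding p_def using Pmono[OF lipx_const lipx_Pi, of 0 w] Pi_nonneg Pconst by simp

lemma p_Nil: "p [] = 1" unfolding p_def using Pone by (simp add: Pi.simps(1)[abs_def])

lemma p_children: "(\<Sum>i<length (ys (length w)). p (i # w)) = p w"
  unfolding p_def
  by (subst Psum[symmetric]) (simp_all add: lipx_Pi Pi_children del: Pi.simps)

lemma p_zero_Pi:
  assumes "p w > 0"
  shows "\<exists>x. Pi w x > 0"
proof (rule ccontr)
  assume "\<not> (\<exists>x. Pi w x > 0)"
  then have "Pi w = (\<lambda>x. 0)" using Pi_nonneg by (intro ext) (meson antisym not_le)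
  then have "p w = 0" unfolding p_def using Pconst by simp
  then show False using assms by simp
qed

primrec a :: "nat list \<Rightarrow> real" where
  "a [] = 0"
| "a (i # w) = a w + (\<Sum>j<i. p (j # w))"

definition I :: "nat list \<Rightarrow> real set" where "I w = {a w ..< a w + p w}"

lemma psum_mono: "i \<le> j \<Longrightarrow> (\<Sum>l<i. p (l # w)) \<le> (\<Sum>l<j. p (l # w))"
  by (rule sum_mono2) (auto simp: p_nonneg)

lemma child_sub:
  assumes "i < length (ys (length w))"
  shows "I (i # w) \<subseteq> I w"
proof -
  have "a w \<le> a (i # w)" using sum_nonneg[of "{..<i}" "\<lambda>j. p (j # w)"] p_nonneg by simp
  moreover have "a (i # w) + p (i # w) = a w + (\<Sum>j<Suc i. p (j # w))" by simp
  moreover have "(\<Sum>j<Suc i. p (j # w)) \<le> p w"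
    using psum_mono[of "Suc i" "length (ys (length w))" w] assms p_children by simp
  ultimately show ?thesis unfolding I_def by auto
qed

lemma child_disj:
  assumes "i < j" "u \<in> I (i # w)" "u \<in> I (j # w)"
  shows False
proof -
  have "a (i # w) + p (i # w) = a w + (\<Sum>l<Suc i. p (l # w))" by simp
  also have "\<dots> \<le> a (j # w)" using psum_mono[of "Suc i" j w] assms(1) by simp
  finally show False using assms(2,3) unfolding I_def by auto
qed

lemma child_cover:
  assumes "u \<in> I w"
  shows "\<exists>i<length (ys (length w)). u \<in> I (i # w)"
proof -
  define n where "n = length (ys (length w))"
  define S where "S i = (\<Sum>l<i. p (l # w))" for i
  have Sn: "S n = p w" unfolding S_def n_def by (rule p_children)
  have ex: "\<exists>i. u - a w < S (Suc i) \<and> i < n"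
  proof -
    have "n > 0" unfolding n_def using ys_prop(1) by simp
    then have "Suc (n - 1) = n" by simp
    moreover have "u - a w < S n" using assms Sn unfolding I_def by auto
    ultimately show ?thesis using \<open>n > 0\<close> by (intro exI[of _ "n - 1"]) auto
  qed
  define i where "i = (LEAST i. u - a w < S (Suc i))"
  have i1: "u - a w < S (Suc i)" unfolding i_def using ex by (metis (mono_tags, lifting) LeastI)
  have i2: "i < n"
  proof -
    obtain j where "u - a w < S (Suc j)" "j < n" using ex by blast
    then have "i \<le> j" unfolding i_def by (simp add: Least_le)
    then show ?thesis using \<open>j < n\<close> by simp
  qed
  have i3: "S i \<le> u - a w"
  proof (cases i)
    case 0 then show ?thesis using assms unfolding S_def I_def by simp
  next
    case (Suc j)
    then have "j < i" by simp
    then have "\<not> (u - a w < S (Suc j))" unfolding i_def using not_less_Least by blast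
    then show ?thesis using Suc by simp
  qed
  have "u \<in> I (i # w)" unfolding I_def using i1 i3 by (simp add: S_def algebra_simps)
  then show ?thesis using i2 n_def by blast
qed

lemma I_Nil: "I [] = {0..<1}" unfolding I_def using p_Nil by simp

lemma level:
  assumes "u \<in> {0..<1}"
  shows "\<exists>!w. w \<in> W k \<and> u \<in> I w"
proof (induction k)
  case 0 then show ?case using assms I_Nil by auto
next
  case (Suc k)
  from Suc obtain w where w: "w \<in> W k" "u \<in> I w" by blast
  obtain i where i: "i < length (ys k)" "u \<in> I (i # w)" using child_cover[OF w(2)] W_length[OF w(1)] by blast
  show ?case
  proof (rule ex1I[of _ "i # w"])
    show "i # w \<in> W (Suc k) \<and> u \<in> I (i # w)" using i w W_Cons by blast
    fix v assume v: "v \<in> W (Suc k) \<and> u \<in> I v"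
    then obtain j w' where v': "v = j # w'" "j < length (ys k)" "w' \<in> W k" by auto
    have "u \<in> I w'" using child_sub[of j w'] v v' W_length[OF v'(3)] by auto
    then have "w' = w" using Suc w v'(3) by blast
    moreover have "j = i"
    proof (rule ccontr)
      assume "j \<noteq> i"
      then show False
        using child_disj[of i j u w] child_disj[of j i u w] i(2) v v' \<open>w' = w\<close>
        by (cases "i < j") auto
    qed
    ultimately show "v = i # w" using v' by simp
  qed
qed

end


context riesz_loc begin

definition wd :: "nat \<Rightarrow> real \<Rightarrow> nat list" where
  "wd k u = (THE w. w \<in> W k \<and> u \<in> I w)"

lemma wd_prop: "u \<in> {0..<1} \<Longrightarrow> wd k u \<in> W k \<and> u \<in> I (wd k u)"
  unfolding wd_def by (rule theI'[OF level])

lemma wd_eq: "u \<in> {0..<1} \<Longrightarrow> w \<in> W k \<Longrightarrow> u \<in> I w \<Longrightarrow> wd k u = w"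
  unfolding wd_def by (rule the1_equality[OF level]) auto

lemma I_sub01: "w \<in> W k \<Longrightarrow> I w \<subseteq> {0..<1}"
proof (induction k arbitrary: w)
  case 0 then show ?case using I_Nil by simp
next
  case (Suc k)
  then obtain i v where v: "w = i # v" "i < length (ys k)" "v \<in> W k" by auto
  have "I (i # v) \<subseteq> I v" using child_sub[of i v] v W_length[OF v(3)] by simp
  then show ?case using Suc.IH[OF v(3)] v(1) by blast
qed

lemma wd_Suc:
  assumes "u \<in> {0..<1}"
  shows "\<exists>i. wd (Suc k) u = i # wd k u"
proof -
  have "wd (Suc k) u \<in> W (Suc k)" "u \<in> I (wd (Suc k) u)" using wd_prop[OF assms, of "Suc k"] by blast+
  then obtain i v where v: "wd (Suc k) u = i # v" "i < length (ys k)" "v \<in> W k" by auto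
  have "I (i # v) \<subseteq> I v" using child_sub[of i v] v W_length[OF v(3)] by simp
  then have "u \<in> I v" using \<open>u \<in> I (wd (Suc k) u)\<close> v(1) by auto
  then have "wd k u = v" by (rule wd_eq[OF assms v(3)])
  then show ?thesis using v(1) by blast
qed

lemma Pi_tail_pos: "Pi (i # w) x > 0 \<Longrightarrow> Pi w x > 0"
  using Pi_nonneg[of w x] phi_nonneg[of "length w" i x]
  by (auto simp: zero_less_mult_iff)

lemma Pi_head_pos: "Pi (i # w) x > 0 \<Longrightarrow> phi (length w) i x > 0"
  using Pi_nonneg[of w x] phi_nonneg[of "length w" i x]
  by (auto simp: zero_less_mult_iff)

lemma wd_mono_pos:
  assumes "u \<in> {0..<1}" "k \<le> m" "Pi (wd m u) x > 0"
  shows "Pi (wd k u) x > 0"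
  using assms(2,3)
proof (induction m rule: dec_induct)
  case base then show ?case .
next
  case (step m)
  obtain i where "wd (Suc m) u = i # wd m u" using wd_Suc[OF assms(1)] by blast
  then show ?case using step Pi_tail_pos by metis
qed

lemma p_pos_wd: "u \<in> {0..<1} \<Longrightarrow> p (wd k u) > 0"
  using wd_prop[of u k] unfolding I_def by auto

definition xw :: "nat list \<Rightarrow> 'b" where "xw w = (SOME x. Pi w x > 0)"

lemma xw_pos: "Pi w x > 0 \<Longrightarrow> Pi w (xw w) > 0"
  unfolding xw_def by (rule someI)

lemma xw_pos_p: "p w > 0 \<Longrightarrow> Pi w (xw w) > 0"
  using p_zero_Pi xw_pos by blast

lemma close:
  assumes "Pi (i # w) x > 0" "Pi (i # w) y > 0"
  shows "dist x y < 4 * eps (length w)"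
proof -
  have "dist x (ys (length w) ! i) < 2 * eps (length w)" by (rule phi_pos_dist[OF Pi_head_pos[OF assms(1)]])
  moreover have "dist y (ys (length w) ! i) < 2 * eps (length w)" by (rule phi_pos_dist[OF Pi_head_pos[OF assms(2)]])
  ultimately show ?thesis using dist_triangle[of x y "ys (length w) ! i"] by (simp add: dist_commute)
qed

definition Psik :: "nat \<Rightarrow> real \<Rightarrow> 'b" where "Psik k u = xw (wd k u)"

lemma Psik_pos: "u \<in> {0..<1} \<Longrightarrow> Pi (wd k u) (Psik k u) > 0"
  unfolding Psik_def by (rule xw_pos_p[OF p_pos_wd])

lemma Psik_close:
  assumes "u \<in> {0..<1}" "Suc k \<le> m"
  shows "dist (Psik m u) (Psik (Suc k) u) < 4 * eps k"
proof -
  have a: "Pi (wd (Suc k) u) (Psik m u) > 0" by (rule wd_mono_pos[OF assms Psik_pos[OF assms(1)]])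
  have b: "Pi (wd (Suc k) u) (Psik (Suc k) u) > 0" by (rule Psik_pos[OF assms(1)])
  obtain i where i: "wd (Suc k) u = i # wd k u" using wd_Suc[OF assms(1)] by blast
  have l: "length (wd k u) = k" using wd_prop[OF assms(1)] W_length by blast
  show ?thesis using close[of i "wd k u" "Psik m u" "Psik (Suc k) u"] a b i l by simp
qed

lemma eps_small: "e > 0 \<Longrightarrow> \<exists>k. eps k < e"
proof -
  assume "e > 0"
  obtain k :: nat where "1 / e < real k" using reals_Archimedean2 by blast
  then have "1 < e * real (Suc k)" using \<open>e > 0\<close> by (simp add: field_simps)
  then have "eps k < e" unfolding eps_def using \<open>e > 0\<close> by (simp add: field_simps)
  then show ?thesis by blast
qed

lemma eps_lim: "eps \<longlonglongrightarrow> 0"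
  unfolding eps_def using LIMSEQ_Suc[OF lim_inverse_n'] by (simp add: inverse_eq_divide)

lemma Psik_Cauchy:
  assumes "u \<in> {0..<1}"
  shows "Cauchy (\<lambda>m. Psik m u)"
proof (rule metric_CauchyI)
  fix e :: real assume "e > 0"
  then obtain k where k: "eps k < e / 8" using eps_small[of "e/8"] by auto
  show "\<exists>N. \<forall>m\<ge>N. \<forall>n\<ge>N. dist (Psik m u) (Psik n u) < e"
  proof (intro exI[of _ "Suc k"] allI impI)
    fix m n assume "Suc k \<le> m" "Suc k \<le> n"
    then have "dist (Psik m u) (Psik (Suc k) u) < 4 * eps k" "dist (Psik n u) (Psik (Suc k) u) < 4 * eps k"
      using Psik_close[OF assms] by auto
    then show "dist (Psik m u) (Psik n u) < e"
      using dist_triangle[of "Psik m u" "Psik n u" "Psik (Suc k) u"] k by (simp add: dist_commute)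
  qed
qed

definition Psi :: "real \<Rightarrow> 'b" where "Psi u = lim (\<lambda>k. Psik k u)"

lemma Psi_lim:
  assumes "u \<in> {0..<1}"
  shows "(\<lambda>k. Psik k u) \<longlonglongrightarrow> Psi u"
proof -
  have "Topological_Spaces.complete (UNIV :: 'b set)" by (rule compact_imp_complete[OF cpt])
  then obtain l where "(\<lambda>k. Psik k u) \<longlonglongrightarrow> l"
    by (rule completeE) (use Psik_Cauchy[OF assms] in auto)
  then show ?thesis unfolding Psi_def by (simp add: limI)
qed

lemma Psi_close:
  assumes "u \<in> {0..<1}"
  shows "dist (Psi u) (Psik (Suc k) u) \<le> 4 * eps k"
proof -
  have "(\<lambda>m. dist (Psik m u) (Psik (Suc k) u)) \<longlonglongrightarrow> dist (Psi u) (Psik (Suc k) u)"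
    by (intro tendsto_dist Psi_lim[OF assms] tendsto_const)
  moreover have "\<exists>N. \<forall>m\<ge>N. dist (Psik m u) (Psik (Suc k) u) \<le> 4 * eps k"
    using Psik_close[OF assms] by (intro exI[of _ "Suc k"]) (auto intro: less_imp_le)
  ultimately show ?thesis by (rule LIMSEQ_le_const2)
qed

end


definition M0 :: "real measure" where "M0 = restrict_space lborel {0..<1::real}"

lemma M0_space: "space M0 = {0..<1}"
  unfolding M0_def by (simp add: space_restrict_space)

lemma M0_sets: "A \<in> sets M0 \<longleftrightarrow> A \<subseteq> {0..<1} \<and> A \<in> sets lborel"
  unfolding M0_def by (rule sets_restrict_space_iff) simp

lemma M0_prob: "prob_space M0"
  unfolding M0_def by (rule prob_space_restrict_space) simp_all

context riesz_loc begin

lemma I_sets: "w \<in> W k \<Longrightarrow> I w \<in> sets M0"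
  unfolding M0_sets using I_sub01[of w k] by (simp add: I_def)

lemma measure_I: "w \<in> W k \<Longrightarrow> measure M0 (I w) = p w"
proof -
  assume w: "w \<in> W k"
  have "measure M0 (I w) = measure lborel (I w)"
    unfolding M0_def by (rule measure_restrict_space) (use I_sub01[OF w] in simp_all)
  also have "\<dots> = p w" unfolding I_def using p_nonneg[of w] by simp
  finally show ?thesis .
qed

lemma wd_meas: "wd k \<in> measurable M0 (count_space UNIV)"
  unfolding measurable_count_space_eq2_countable
proof (intro conjI ballI)
  show "wd k \<in> space M0 \<rightarrow> UNIV" by simp
  fix w :: "nat list"
  have "wd k -` {w} \<inter> space M0 = (if w \<in> W k then I w else {})"
  proof (intro set_eqI iffI)
    fix u assume "u \<in> wd k -` {w} \<inter> space M0"
    then have u: "u \<in> {0..<1}" "wd k u = w" by (auto simp: M0_space)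
    then show "u \<in> (if w \<in> W k then I w else {})" using wd_prop[OF u(1), of k] by auto
  next
    fix u assume u: "u \<in> (if w \<in> W k then I w else {})"
    then have w: "w \<in> W k" "u \<in> I w" by (auto split: if_splits)
    then have "u \<in> {0..<1}" using I_sub01 by blast
    then show "u \<in> wd k -` {w} \<inter> space M0" using wd_eq[OF _ w] by (simp add: M0_space)
  qed
  then show "wd k -` {w} \<inter> space M0 \<in> sets M0" using I_sets by simp
qed

lemma Psik_meas: "Psik k \<in> borel_measurable M0"
proof -
  have "(\<lambda>u. xw (wd k u)) \<in> borel_measurable M0"
    by (rule measurable_compose[OF wd_meas]) simp
  then show ?thesis unfolding Psik_def[abs_def] .
qed

lemma Psi_meas: "Psi \<in> borel_measurable M0"
  by (rule borel_measurable_LIMSEQ_metric[OF Psik_meas Psi_lim]) (simp add: M0_space)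

definition muR :: "'b measure" where "muR = distr M0 borel Psi"

lemma muR_prob: "muR \<in> prob_measures"
  unfolding prob_measures_def muR_def
  using prob_space.prob_space_distr[OF M0_prob Psi_meas] by simp

lemma int_Psik:
  assumes "lip L f"
  shows "(\<integral>u. f (Psik m u) \<partial>M0) = (\<Sum>w\<in>W m. f (xw w) * p w)"
proof -
  have eq: "f (Psik m u) = (\<Sum>w\<in>W m. f (xw w) * indicator (I w) u)" if u: "u \<in> space M0" for u
  proof -
    have u': "u \<in> {0..<1}" using u M0_space by simp
    have "(\<Sum>w\<in>W m. f (xw w) * indicator (I w) u) = (\<Sum>w\<in>W m. if w = wd m u then f (xw w) else 0)"
    proof (rule sum.cong[OF refl])
      fix w assume w: "w \<in> W m"
      have "u \<in> I w \<longleftrightarrow> w = wd m u" using wd_eq[OF u' w] wd_prop[OF u', of m] by auto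
      then show "f (xw w) * indicator (I w) u = (if w = wd m u then f (xw w) else 0)"
        by (auto simp: indicator_def)
    qed
    also have "\<dots> = f (xw (wd m u))" using wd_prop[OF u', of m] W_finite[of m] by (simp add: sum.delta)
    finally show ?thesis unfolding Psik_def by simp
  qed
  have "(\<integral>u. f (Psik m u) \<partial>M0) = (\<integral>u. (\<Sum>w\<in>W m. f (xw w) * indicator (I w) u) \<partial>M0)"
    by (rule Bochner_Integration.integral_cong[OF refl eq])
  also have "\<dots> = (\<Sum>w\<in>W m. (\<integral>u. f (xw w) * indicator (I w) u \<partial>M0))"
  proof (rule Bochner_Integration.integral_sum)
    fix w assume w: "w \<in> W m"
    have "emeasure M0 (I w) < top"
    proof -
      interpret prob_space M0 by (rule M0_prob)
      show ?thesis by (rule less_top[THEN iffD1, OF emeasure_finite])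
    qed
    then show "integrable M0 (\<lambda>u. f (xw w) * indicator (I w) u)"
      using I_sets[OF w] by (intro integrable_mult_right integrable_real_indicator) simp_all
  qed
  also have "\<dots> = (\<Sum>w\<in>W m. f (xw w) * p w)"
  proof (rule sum.cong[OF refl])
    fix w assume w: "w \<in> W m"
    have "I w \<inter> space M0 = I w" using I_sub01[OF w] M0_space by auto
    then show "(\<integral>u. f (xw w) * indicator (I w) u \<partial>M0) = f (xw w) * p w"
      using measure_I[OF w] by simp
  qed
  finally show ?thesis .
qed

lemma int_Psi_close:
  assumes "lip L f" "L \<ge> 0"
  shows "\<bar>(\<integral>u. f (Psi u) \<partial>M0) - (\<integral>u. f (Psik (Suc k) u) \<partial>M0)\<bar> \<le> L * (4 * eps k)"
proof -
  interpret prob_space M0 by (rule M0_prob)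
  obtain B where B: "\<And>x. \<bar>f x\<bar> \<le> B" using lip_bounded[OF cpt assms(1)] by blast
  have fm: "f \<in> borel_measurable borel" by (rule lip_meas[OF assms(1)])
  have i1: "integrable M0 (\<lambda>u. f (Psi u))"
    by (rule integrable_const_bound[where B=B]) (use B measurable_compose[OF Psi_meas fm] in auto)
  have i2: "integrable M0 (\<lambda>u. f (Psik (Suc k) u))"
    by (rule integrable_const_bound[where B=B]) (use B measurable_compose[OF Psik_meas fm] in auto)
  have bd: "\<bar>f (Psi u) - f (Psik (Suc k) u)\<bar> \<le> L * (4 * eps k)" if "u \<in> space M0" for u
  proof -
    have "\<bar>f (Psi u) - f (Psik (Suc k) u)\<bar> \<le> L * dist (Psi u) (Psik (Suc k) u)" by (rule lipD[OF assms(1)])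
    also have "\<dots> \<le> L * (4 * eps k)" using Psi_close[of u k] that M0_space assms(2) by (intro mult_left_mono) auto
    finally show ?thesis .
  qed
  have id: "integrable M0 (\<lambda>u. f (Psi u) - f (Psik (Suc k) u))" using i1 i2 by simp
  have bd1: "f (Psi u) - f (Psik (Suc k) u) \<le> L * (4 * eps k)" if "u \<in> space M0" for u
    using bd[OF that] by linarith
  have bd2: "-(L * (4 * eps k)) \<le> f (Psi u) - f (Psik (Suc k) u)" if "u \<in> space M0" for u
    using bd[OF that] by linarith
  have "(\<integral>u. f (Psi u) - f (Psik (Suc k) u) \<partial>M0) \<le> L * (4 * eps k)"
    by (rule integral_le_const[OF id AE_I2[OF bd1]])
  moreover have "-(L * (4 * eps k)) \<le> (\<integral>u. f (Psi u) - f (Psik (Suc k) u) \<partial>M0)"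
    by (rule integral_ge_const[OF id AE_I2[OF bd2]])
  moreover have "(\<integral>u. f (Psi u) - f (Psik (Suc k) u) \<partial>M0) = (\<integral>u. f (Psi u) \<partial>M0) - (\<integral>u. f (Psik (Suc k) u) \<partial>M0)"
    using i1 i2 by simp
  ultimately show ?thesis by (simp add: abs_le_iff)
qed

lemma Phi_close:
  assumes "lip L f" "L \<ge> 0"
  shows "\<bar>\<Phi> f - (\<Sum>w\<in>W (Suc k). f (xw w) * p w)\<bar> \<le> L * (4 * eps k)"
proof -
  define c where "c = L * (4 * eps k)"
  define g where "g x = (\<Sum>w\<in>W (Suc k). f (xw w) * Pi w x)" for x
  have lf: "lipx f" using assms(1) by (rule lipxI)
  have lg: "lipx g" unfolding g_def[abs_def] using W_finite by (intro lipx_sum lipx_scale lipx_Pi)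
  have Pg: "\<Phi> g = (\<Sum>w\<in>W (Suc k). f (xw w) * p w)"
    unfolding g_def[abs_def] p_def
    by (subst Psum) (simp_all add: W_finite lipx_scale lipx_Pi Pscale)
  have pt: "\<bar>f x - g x\<bar> \<le> c" for x
  proof -
    have "f x - g x = (\<Sum>w\<in>W (Suc k). (f x - f (xw w)) * Pi w x)"
      unfolding g_def using Pi_total[where k="Suc k" and x=x]
      by (simp add: left_diff_distrib sum_subtractf sum_distrib_left[symmetric])
    also have "\<bar>\<dots>\<bar> \<le> (\<Sum>w\<in>W (Suc k). \<bar>(f x - f (xw w)) * Pi w x\<bar>)" by (rule sum_abs)
    also have "\<dots> \<le> (\<Sum>w\<in>W (Suc k). c * Pi w x)"
    proof (rule sum_mono)
      fix w assume w: "w \<in> W (Suc k)"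
      show "\<bar>(f x - f (xw w)) * Pi w x\<bar> \<le> c * Pi w x"
      proof (cases "Pi w x > 0")
        case True
        obtain i v where v: "w = i # v" "v \<in> W k" using w by auto
        have "Pi w (xw w) > 0" by (rule xw_pos[OF True])
        then have "dist x (xw w) < 4 * eps k"
          using close[of i v x "xw w"] True v W_length[OF v(2)] by simp
        then have "\<bar>f x - f (xw w)\<bar> \<le> c"
          unfolding c_def using lipD[OF assms(1), of x "xw w"] assms(2)
          by (meson less_imp_le mult_left_mono order_trans)
        then show ?thesis using Pi_nonneg[of w x] by (simp add: abs_mult mult_right_mono)
      next
        case False
        then have "Pi w x = 0" using Pi_nonneg[of w x] by simp
        then show ?thesis by simp
      qed
    qed
    also have "\<dots> = c" using Pi_total[where k="Suc k" and x=x] by (simp add: sum_distrib_left[symmetric])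
    finally show ?thesis .
  qed
  have pt1: "f x \<le> g x + c" for x using pt[of x] by linarith
  have pt2: "g x \<le> f x + c" for x using pt[of x] by linarith
  have "\<Phi> f \<le> \<Phi> (\<lambda>x. g x + c)" by (rule Pmono[OF lf lipx_add[OF lg lipx_const] pt1])
  moreover have "\<Phi> g \<le> \<Phi> (\<lambda>x. f x + c)" by (rule Pmono[OF lg lipx_add[OF lf lipx_const] pt2])
  ultimately show ?thesis unfolding Padd_const[OF lf] Padd_const[OF lg] Pg c_def by (simp add: abs_le_iff)
qed

lemma muR_int:
  assumes "lip L f"
  shows "(\<integral>x. f x \<partial>muR) = \<Phi> f"
proof -
  obtain L' where L': "L' > 0" "lip L' f" using lip_nonneg_ex[OF assms] by blast
  have e: "(\<integral>x. f x \<partial>muR) = (\<integral>u. f (Psi u) \<partial>M0)"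
    unfolding muR_def by (rule integral_distr[OF Psi_meas lip_meas[OF assms]])
  have b: "\<bar>\<Phi> f - (\<integral>x. f x \<partial>muR)\<bar> \<le> 8 * L' * eps k" for k
  proof -
    have "\<bar>\<Phi> f - (\<Sum>w\<in>W (Suc k). f (xw w) * p w)\<bar> \<le> L' * (4 * eps k)"
      by (rule Phi_close[OF L'(2)]) (use L' in simp)
    moreover have "\<bar>(\<integral>u. f (Psi u) \<partial>M0) - (\<Sum>w\<in>W (Suc k). f (xw w) * p w)\<bar> \<le> L' * (4 * eps k)"
      using int_Psi_close[OF L'(2), of k] int_Psik[OF L'(2), of "Suc k"] L' by simp
    ultimately show ?thesis unfolding e by (simp add: abs_le_iff)
  qed
  have "(\<lambda>k. 8 * L' * eps k) \<longlonglongrightarrow> 8 * L' * 0" by (intro tendsto_mult tendsto_const eps_lim)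
  then have t: "(\<lambda>k. 8 * L' * eps k) \<longlonglongrightarrow> 0" by simp
  have "\<bar>\<Phi> f - (\<integral>x. f x \<partial>muR)\<bar> \<le> 0"
    by (rule LIMSEQ_le[OF tendsto_const t]) (use b in blast)
  then show ?thesis by simp
qed

end


lemma riesz:
  fixes \<Phi> :: "('b::metric_space \<Rightarrow> real) \<Rightarrow> real"
  assumes cpt: "compact (UNIV::'b set)"
   and add: "\<And>f g L K. lip L f \<Longrightarrow> lip K g \<Longrightarrow> \<Phi> (\<lambda>x. f x + g x) = \<Phi> f + \<Phi> g"
   and scale: "\<And>f L a. lip L f \<Longrightarrow> \<Phi> (\<lambda>x. a * f x) = a * \<Phi> f"
   and mono: "\<And>f g L K. lip L f \<Longrightarrow> lip K g \<Longrightarrow> (\<And>x. f x \<le> g x) \<Longrightarrow> \<Phi> f \<le> \<Phi> g"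
   and one: "\<Phi> (\<lambda>x. 1) = 1"
  shows "\<exists>\<mu> \<in> prob_measures. \<forall>L f. lip L f \<longrightarrow> (\<integral>x. f x \<partial>\<mu>) = \<Phi> f"
proof -
  interpret riesz_loc \<Phi>
    by (unfold_locales; fact)
  show ?thesis using muR_prob muR_int by blast
qed



context setting begin

lemma exists_muR: "\<exists>\<mu> \<in> prob_measures. \<forall>L f. lip L f \<longrightarrow> (\<integral>x. f x \<partial>\<mu>) = cval f"
proof (rule riesz[OF X_compact])
  show "\<And>f g L K. lip L f \<Longrightarrow> lip K g \<Longrightarrow> cval (\<lambda>x. f x + g x) = cval f + cval g" by (rule cval_add)
  show "\<And>f L a. lip L f \<Longrightarrow> cval (\<lambda>x. a * f x) = a * cval f" by (rule cval_scale)
  show "\<And>f g L K. lip L f \<Longrightarrow> lip K g \<Longrightarrow> (\<And>x. f x \<le> g x) \<Longrightarrow> cval f \<le> cval g" by (rule cval_mono)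
  show "cval (\<lambda>x. 1) = 1" by (rule cval_const)
qed

lemma Tqn_fix: "Tq \<tau> q \<mu> = \<mu> \<Longrightarrow> (Tq \<tau> q ^^ n) \<mu> = \<mu>"
  by (induction n) auto

lemma int_near_cval:
  assumes "\<mu> \<in> prob_measures" "L > 0" "lip L f"
  shows "\<bar>(\<integral>x. (U^^n) f x \<partial>\<mu>) - cval f\<bar> \<le> 2 * om L n"
proof -
  have l: "lip (L * (1 + r * t) ^ n) ((U^^n) f)" by (rule Un_lip[OF assms(3)]) (use assms(2) in simp)
  have b1: "cval f - 2 * om L n \<le> (U^^n) f x" for x using cval_unif[OF assms(2,3), of n x] by linarith
  have b2: "(U^^n) f x \<le> cval f + 2 * om L n" for x using cval_unif[OF assms(2,3), of n x] by linarith
  note this = b1 b2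
  from integral_bounds_pm[OF X_compact assms(1) l this] show ?thesis by (auto simp: abs_le_iff)
qed

lemma invariant_char:
  assumes "\<mu> \<in> prob_measures" "Tq \<tau> q \<mu> = \<mu>" "lip L f"
  shows "(\<integral>x. f x \<partial>\<mu>) = cval f"
proof -
  obtain L' where L': "L' > 0" "lip L' f" using lip_nonneg_ex[OF assms(3)] by blast
  have b: "\<bar>(\<integral>x. f x \<partial>\<mu>) - cval f\<bar> \<le> 2 * om L' n" for n
  proof -
    have "(\<integral>x. f x \<partial>\<mu>) = (\<integral>x. f x \<partial>(Tq \<tau> q ^^ n) \<mu>)" using Tqn_fix[OF assms(2)] by simp
    also have "\<dots> = (\<integral>x. (U^^n) f x \<partial>\<mu>)" by (rule Tqn_int[OF assms(1) L'(2)]) (use L' in simp)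
    finally show ?thesis using int_near_cval[OF assms(1) L'] by simp
  qed
  have "(\<lambda>n. 2 * om L' n) \<longlonglongrightarrow> 2 * 0" by (intro tendsto_mult tendsto_const om_lim[OF L'(1)])
  then have t: "(\<lambda>n. 2 * om L' n) \<longlonglongrightarrow> 0" by simp
  have "\<bar>(\<integral>x. f x \<partial>\<mu>) - cval f\<bar> \<le> 0"
    by (rule LIMSEQ_le[OF tendsto_const t]) (use b in blast)
  then show ?thesis by simp
qed

lemma main:
  shows "(\<exists>!\<mu>. \<mu> \<in> prob_measures \<and> Tq \<tau> q \<mu> = \<mu>) \<and>
         (\<exists>\<mu>R. \<mu>R \<in> prob_measures \<and> Tq \<tau> q \<mu>R = \<mu>R \<and>
           (\<forall>\<mu>0 \<in> prob_measures. \<exists>C c. C \<ge> 0 \<and> 0 \<le> c \<and> c < 1 \<and>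
              (\<forall>k. dMK ((Tq \<tau> q ^^ k) \<mu>0) \<mu>R \<le> C * c ^ k)))"
proof -
  obtain \<mu>R where R: "\<mu>R \<in> prob_measures" "\<And>L f. lip L f \<Longrightarrow> (\<integral>x. f x \<partial>\<mu>R) = cval f"
    using exists_muR by blast
  have fixR: "Tq \<tau> q \<mu>R = \<mu>R"
  proof (rule prob_measures_eqI[OF X_compact Tq_prob[OF R(1)] R(1)])
    fix L and f :: "'a \<Rightarrow> real" assume l: "lip L f"
    obtain L' where L': "L' > 0" "lip L' f" using lip_nonneg_ex[OF l] by blast
    have "(\<integral>y. f y \<partial>Tq \<tau> q \<mu>R) = (\<integral>x. U f x \<partial>\<mu>R)" by (rule Tq_int[OF R(1) l])
    also have "\<dots> = cval (U f)" by (rule R(2)[OF U_lip[OF L'(2)]]) (use L' in simp)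
    also have "\<dots> = cval f" by (rule cval_U[OF L'(2)]) (use L' in simp)
    also have "\<dots> = (\<integral>x. f x \<partial>\<mu>R)" using R(2)[OF l] by simp
    finally show "(\<integral>y. f y \<partial>Tq \<tau> q \<mu>R) = (\<integral>x. f x \<partial>\<mu>R)" .
  qed
  have uniq: "\<mu> = \<mu>R" if "\<mu> \<in> prob_measures" "Tq \<tau> q \<mu> = \<mu>" for \<mu>
  proof (rule prob_measures_eqI[OF X_compact that(1) R(1)])
    fix L and f :: "'a \<Rightarrow> real" assume l: "lip L f"
    show "(\<integral>x. f x \<partial>\<mu>) = (\<integral>x. f x \<partial>\<mu>R)" using invariant_char[OF that l] R(2)[OF l] by simp
  qed
  have conv: "\<exists>C c. C \<ge> 0 \<and> 0 \<le> c \<and> c < 1 \<and> (\<forall>k. dMK ((Tq \<tau> q ^^ k) \<mu>0) \<mu>R \<le> C * c ^ k)"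
    if mu0: "\<mu>0 \<in> prob_measures" for \<mu>0
  proof (intro exI conjI allI)
    show "0 \<le> 2 * (BB * 1 * DX / rho ^ M)" using BB_pos DX(1) rho(1) by simp
    show "0 \<le> rho" "rho < 1" using rho by auto
    fix k
    show "dMK ((Tq \<tau> q ^^ k) \<mu>0) \<mu>R \<le> 2 * (BB * 1 * DX / rho ^ M) * rho ^ k"
    proof (rule dMK_le)
      fix f :: "'a \<Rightarrow> real" assume l: "lip 1 f"
      have "(\<integral>y. f y \<partial>(Tq \<tau> q ^^ k) \<mu>0) = (\<integral>x. (U^^k) f x \<partial>\<mu>0)" by (rule Tqn_int[OF mu0 l]) simp
      moreover have "\<bar>(\<integral>x. (U^^k) f x \<partial>\<mu>0) - cval f\<bar> \<le> 2 * om 1 k" by (rule int_near_cval[OF mu0 _ l]) simp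
      moreover have "(\<integral>y. f y \<partial>\<mu>R) = cval f" by (rule R(2)[OF l])
      moreover have "om 1 k \<le> (BB * 1 * DX / rho ^ M) * rho ^ k" by (rule om_le) simp
      ultimately show "(\<integral>y. f y \<partial>(Tq \<tau> q ^^ k) \<mu>0) - (\<integral>y. f y \<partial>\<mu>R) \<le> 2 * (BB * 1 * DX / rho ^ M) * rho ^ k"
        by (simp add: abs_le_iff)
    qed
  qed
  show ?thesis
  proof (intro conjI)
    show "\<exists>!\<mu>. \<mu> \<in> prob_measures \<and> Tq \<tau> q \<mu> = \<mu>"
      using R(1) fixR uniq by blast
    show "\<exists>\<mu>R. \<mu>R \<in> prob_measures \<and> Tq \<tau> q \<mu>R = \<mu>R \<and>
           (\<forall>\<mu>0 \<in> prob_measures. \<exists>C c. C \<ge> 0 \<and> 0 \<le> c \<and> c < 1 \<and>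
              (\<forall>k. dMK ((Tq \<tau> q ^^ k) \<mu>0) \<mu>R \<le> C * c ^ k))"
      using R(1) fixR conv by blast
  qed
qed

end

theorem mainTheorem12:
  fixes \<tau> :: "'l::metric_space \<Rightarrow> 'a::metric_space \<Rightarrow> 'a"
    and q :: "'a \<Rightarrow> 'l measure"
    and s r t :: real and M :: nat
  assumes X_compact: "compact (UNIV :: 'a set)"
    and L_compact: "compact (UNIV :: 'l set)"
    and tau_cont: "continuous_on UNIV (\<lambda>(l, x). \<tau> l x)"
    and q_prob: "\<And>x. q x \<in> prob_measures"
    and q_cont: "\<And>x. ((\<lambda>y. dMK (q y) (q x)) \<longlongrightarrow> 0) (at x)"
    and W1: "\<And>l x y. dist (\<tau> l x) (\<tau> l y) \<le> dist x y"
    and MP1_s: "s > 0" and MP1_M: "M \<ge> 1"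
    and MP1: "\<And>x y f. f \<in> Lip1 \<Longrightarrow>
               P_int \<tau> q M x (\<lambda>ls. ennreal \<bar>f (tau_seq \<tau> ls x) - f (tau_seq \<tau> ls y)\<bar>)
                 \<le> ennreal (s * dist x y)"
    and H2_r: "r \<ge> 0"
    and H2: "\<And>l1 l2 x. dist (\<tau> l1 x) (\<tau> l2 x) \<le> r * dist l1 l2"
    and H3_t: "t \<ge> 0"
    and H3: "\<And>x y. dMK (q x) (q y) \<le> t * dist x y"
    and contr: "s + r * real M * t < 1"
  shows "(\<exists>!\<mu>. \<mu> \<in> prob_measures \<and> Tq \<tau> q \<mu> = \<mu>) \<and>
         (\<exists>\<mu>R. \<mu>R \<in> prob_measures \<and> Tq \<tau> q \<mu>R = \<mu>R \<and>
           (\<forall>\<mu>0 \<in> prob_measures. \<exists>C c. C \<ge> 0 \<and> 0 \<le> c \<and> c < 1 \<and>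
              (\<forall>k. dMK ((Tq \<tau> q ^^ k) \<mu>0) \<mu>R \<le> C * c ^ k)))"
proof -
  interpret setting \<tau> q s r t M
    by (unfold_locales; fact)
  show ?thesis by (rule main)
qed



end
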